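(* Under the setup in the context, assume in addition that the block GMRES residual $F_{j-1}^{(G)}$ has rank $L$. Then the cosines of the $L$ principal angles between $\mathcal R(F_{j-1}^{(G)})$ and $\mathcal R(AW_j)$ (which equals $A\mathbb K_j(A,F_0)$ when no replacement of dependent Arnoldi vectors has occurred) are exactly the singular values of $Q_j^{(11)}$. Equivalently, if $Q_j^{(11)}=\mathcal U_1\mathcal C\mathcal V_1^*$ and $Q_j^{(21)}=\mathcal U_2\mathcal S\mathcal V_1^*$ is a CS decomposition of the first block column of $\Omega_j$ (with $\mathcal U_1,\mathcal U_2,\mathcal V_1$ unitary, $\mathcal C,\mathcal S$ real nonnegative diagonal with $\mathcal C^2+\mathcal S^2=I_L$), then the diagonal entries of $\mathcal C$ and $\mathcal S$ are the cosines and sines of these principal angles.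
   Context: Let $n,L\ge1$, $A\in\mathbb C^{n\times n}$, $B,X_0\in\mathbb C^{n\times L}$, $F_0=B-AX_0$, and let $F_0=V_1S_0$ be a reduced QR factorization ($V_1\in\mathbb C^{n\times L}$ with orthonormal columns, $S_0\in\mathbb C^{L\times L}$ upper triangular). Fix $j\ge2$. The block Arnoldi process (possibly with dependent basis vectors replaced by new orthonormal vectors) yields $W_k=[V_1,\dots,V_k]\in\mathbb C^{n\times kL}$ ($k\le j+1$) with orthonormal columns, $V_i\in\mathbb C^{n\times L}$, and the block Arnoldi relation $AW_j=W_{j+1}\bar H_j$, where $\bar H_j=(H_{ik})\in\mathbb C^{(j+1)L\times jL}$ has $L\times L$ blocks $H_{ik}$, is block upper Hessenberg ($H_{ik}=0$ for $i>k+1$), and each $H_{k+1,k}$ is upper triangular. For $k\le j$, $\bar H_k$ denotes the leading $(k+1)L\times kL$ submatrix of $\bar H_j$. $E^{[m]}\in\mathbb R^{mL\times L}$ denotes the first $L$ columns of $I_{mL}$. For $k\ge1$ with $\bar H_k$ of full column rank, the block GMRES iterate is $X_k^{(G)}=X_0+W_kY_k^{(G)}$, where $Y_k^{(G)}\in\mathbb C^{kL\times L}$ is the unique minimizer of $\|\bar H_kY-E^{[k+1]}S_0\|_F$ (Frobenius norm), and $F_k^{(G)}=B-AX_k^{(G)}$. $\mathbb K_j(A,F_0)$ is the span of all columns of $F_0,AF_0,\dots,A^{j-1}F_0$. Block QR factorization: assume $\bar H_j$ has full column rank. There are unitary matrices $\Omega_i=\begin{bmatrix}Q_i^{(11)}&Q_i^{(12)}\\Q_i^{(21)}&Q_i^{(22)}\end{bmatrix}\in\mathbb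 C^{2L\times 2L}$ ($i=1,\dots,j$, all four blocks $L\times L$); for $m\ge i+1$ put $Q_i^{(m)}=\mathrm{diag}(I_{(i-1)L},\Omega_i,I_{(m-i-1)L})\in\mathbb C^{mL\times mL}$ and $\bar Q_k=Q_k^{(k+1)}Q_{k-1}^{(k+1)}\cdots Q_1^{(k+1)}$. The $\Omega_i$ are chosen recursively so that $\bar Q_k\bar H_k=\begin{bmatrix}R_k\\ 0_{L\times kL}\end{bmatrix}$ with $R_k\in\mathbb C^{kL\times kL}$ upper triangular and nonsingular ($k=1,\dots,j$). Principal angles: for subspaces $\mathcal U,\mathcal W$ of $\mathbb C^n$ with $\dim\mathcal U=p\le\dim\mathcal W$ and matrices $U,W$ with orthonormal columns spanning them, the $p$ principal angles $\theta_1,\dots,\theta_p\in[0,\pi/2]$ are defined by: $\cos\theta_1,\dots,\cos\theta_p$ are the singular values of $W^*U$. $\mathcal R(\cdot)$ denotes column space. *)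

theory Defs
  imports "Jordan_Normal_Form.Schur_Decomposition" "Jordan_Normal_Form.Char_Poly"
    "HOL-Computational_Algebra.Polynomial"
begin

text \<open>All matrices are complex matrices of the Jordan_Normal_Form library; indices are 0-based,
  block indices (as in the paper) are 1-based.\<close>

definition blk :: "nat \<Rightarrow> nat \<Rightarrow> nat \<Rightarrow> nat \<Rightarrow> complex mat \<Rightarrow> complex mat" where
  "blk r0 c0 r c M = mat r c (\<lambda>(a,b). M $$ (a + r0, b + c0))"

definition orthonormal_cols :: "complex mat \<Rightarrow> bool" where
  "orthonormal_cols M \<longleftrightarrow> mat_adjoint M * M = 1\<^sub>m (dim_col M)"

definition unitary_mat :: "complex mat \<Rightarrow> bool" where
  "unitary_mat M \<longleftrightarrow> dim_row M = dim_col M \<and> orthonormal_cols M"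

definition full_col_rank :: "complex mat \<Rightarrow> bool" where
  "full_col_rank M \<longleftrightarrow> (\<forall>x \<in> carrier_vec (dim_col M). M *\<^sub>v x = 0\<^sub>v (dim_row M) \<longrightarrow> x = 0\<^sub>v (dim_col M))"

definition colspace :: "complex mat \<Rightarrow> complex vec set" where
  "colspace M = {M *\<^sub>v x | x. x \<in> carrier_vec (dim_col M)}"

definition upper_tri :: "complex mat \<Rightarrow> bool" where
  "upper_tri M \<longleftrightarrow> (\<forall>a < dim_row M. \<forall>b < dim_col M. b < a \<longrightarrow> M $$ (a,b) = 0)"

definition frob_norm :: "complex mat \<Rightarrow> real" where
  "frob_norm M = sqrt (\<Sum>a < dim_row M. \<Sum>b < dim_col M. (cmod (M $$ (a,b)))^2)"

definition Emat :: "nat \<Rightarrow> nat \<Rightarrow> complex mat" where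
  "Emat L m = mat (m*L) L (\<lambda>(a,b). if a = b then 1 else 0)"

text \<open>Block upper Hessenberg (L x L blocks) with upper triangular subdiagonal blocks.\<close>
definition block_hessenberg :: "nat \<Rightarrow> complex mat \<Rightarrow> bool" where
  "block_hessenberg L H \<longleftrightarrow>
     (\<forall>a < dim_row H. \<forall>b < dim_col H.
        (a div L > b div L + 1 \<longrightarrow> H $$ (a,b) = 0) \<and>
        (a div L = b div L + 1 \<and> a mod L > b mod L \<longrightarrow> H $$ (a,b) = 0))"

text \<open>Q_i^(m) = diag(I_{(i-1)L}, Omega, I_{(m-i-1)L}).\<close>
definition Qemb :: "nat \<Rightarrow> nat \<Rightarrow> nat \<Rightarrow> complex mat \<Rightarrow> complex mat" where
  "Qemb L m i Om = mat (m*L) (m*L) (\<lambda>(a,b).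
     if (i-1)*L \<le> a \<and> a < (i+1)*L \<and> (i-1)*L \<le> b \<and> b < (i+1)*L
     then Om $$ (a - (i-1)*L, b - (i-1)*L)
     else if a = b then 1 else 0)"

fun prodQ :: "nat \<Rightarrow> (nat \<Rightarrow> complex mat) \<Rightarrow> nat \<Rightarrow> nat \<Rightarrow> complex mat" where
  "prodQ L Om m 0 = 1\<^sub>m (m*L)"
| "prodQ L Om m (Suc i) = Qemb L m (Suc i) (Om (Suc i)) * prodQ L Om m i"

definition Qbar :: "nat \<Rightarrow> (nat \<Rightarrow> complex mat) \<Rightarrow> nat \<Rightarrow> complex mat" where
  "Qbar L Om k = prodQ L Om (k+1) k"

definition singvals :: "complex mat \<Rightarrow> real multiset" where
  "singvals M = image_mset (\<lambda>z. sqrt (Re z)) (proots (char_poly (mat_adjoint M * M)))"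

text \<open>Principal angles between R(U) and R(W) (U, W with orthonormal columns, dim R(U) \<le> dim R(W)):
  the angles in [0, pi/2] whose cosines are the singular values of W^* U.\<close>
definition principal_angles :: "complex mat \<Rightarrow> complex mat \<Rightarrow> real multiset" where
  "principal_angles U W = image_mset arccos (singvals (mat_adjoint W * U))"

definition real_nonneg_diag :: "complex mat \<Rightarrow> bool" where
  "real_nonneg_diag M \<longleftrightarrow> (\<forall>a < dim_row M. \<forall>b < dim_col M.
      (a \<noteq> b \<longrightarrow> M $$ (a,b) = 0) \<and> (a = b \<longrightarrow> Im (M $$ (a,a)) = 0 \<and> Re (M $$ (a,a)) \<ge> 0))"

end

theory Submission imports Defs begin
type_synonym cm = "complex mat"
lemma adj_eq: "mat_adjoint (A::cm) = mat (dim_col A) (dim_row A) (\<lambda>(i,j). cnj (A $$ (j,i)))"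
  unfolding mat_adjoint_def
  by (rule eq_matI) (auto simp: mat_of_rows_def)

lemma adj_dims[simp]: "dim_row (mat_adjoint (A::cm)) = dim_col A" "dim_col (mat_adjoint (A::cm)) = dim_row A"
  by (simp_all add: adj_eq)

lemma adj_index[simp]: "i < dim_col A \<Longrightarrow> j < dim_row A \<Longrightarrow> mat_adjoint (A::cm) $$ (i,j) = cnj (A $$ (j,i))"
  by (simp add: adj_eq)

lemma adj_carrier[simp]: "(A::cm) \<in> carrier_mat r c \<Longrightarrow> mat_adjoint A \<in> carrier_mat c r"
  unfolding carrier_mat_def by simp

lemma adj_adj[simp]: "mat_adjoint (mat_adjoint (A::cm)) = A"
  by (rule eq_matI) simp_all

lemma mult_entry: "dim_col A = dim_row B \<Longrightarrow> i < dim_row A \<Longrightarrow> j < dim_col B \<Longrightarrow>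
   (A * B) $$ (i,j) = (\<Sum>k<dim_row B. A $$ (i,k) * B $$ (k,j))"
  by (simp add: scalar_prod_def atLeast0LessThan)

lemma sp_entry[simp]: "dim_col A = dim_row B \<Longrightarrow> i < dim_row A \<Longrightarrow> j < dim_col B \<Longrightarrow>
   row A i \<bullet> col B j = (\<Sum>k<dim_row B. A $$ (i,k) * B $$ (k,j))"
  by (simp add: scalar_prod_def atLeast0LessThan)

lemma adj_mult: "dim_col (A::cm) = dim_row B \<Longrightarrow> mat_adjoint (A * B) = mat_adjoint B * mat_adjoint A"
proof (rule eq_matI)
  fix i j assume *: "dim_col A = dim_row B" "i < dim_row (mat_adjoint B * mat_adjoint A)" "j < dim_col (mat_adjoint B * mat_adjoint A)"
  then show "mat_adjoint (A * B) $$ (i, j) = (mat_adjoint B * mat_adjoint A) $$ (i, j)"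
    by (simp add: sp_entry mult.commute)
qed simp_all

lemma adj_one[simp]: "mat_adjoint (1\<^sub>m n :: cm) = 1\<^sub>m n"
  by (rule eq_matI) simp_all

lemma sum_single: "(\<And>k. k < (N::nat) \<Longrightarrow> k \<noteq> t \<Longrightarrow> f k = 0) \<Longrightarrow> (\<Sum>k<N. f k) = (if t < N then f t else 0)"
proof -
  assume h: "\<And>k. k < N \<Longrightarrow> k \<noteq> t \<Longrightarrow> f k = 0"
  have "(\<Sum>k<N. f k) = (\<Sum>k<N. if k = t then f t else 0)"
    by (rule sum.cong) (auto simp: h)
  also have "\<dots> = (if t < N then f t else 0)" by simp
  finally show ?thesis .
qed

definition Esh :: "nat \<Rightarrow> nat \<Rightarrow> nat \<Rightarrow> cm" where
  "Esh r c s = mat r c (\<lambda>(a,b). if a = b + s then 1 else 0)"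

lemma Esh_carrier[simp]: "Esh r c s \<in> carrier_mat r c" and Esh_dims[simp]: "dim_row (Esh r c s) = r" "dim_col (Esh r c s) = c"
  by (auto simp: Esh_def)

lemma Esh_index[simp]: "a < r \<Longrightarrow> b < c \<Longrightarrow> Esh r c s $$ (a,b) = (if a = b + s then 1 else 0)"
  by (simp add: Esh_def)

lemma blk_carrier[simp]: "blk r0 c0 r c M \<in> carrier_mat r c" and blk_dims[simp]: "dim_row (blk r0 c0 r c M) = r" "dim_col (blk r0 c0 r c M) = c"
  by (auto simp: blk_def)

lemma blk_index[simp]: "a < r \<Longrightarrow> b < c \<Longrightarrow> blk r0 c0 r c M $$ (a,b) = M $$ (a + r0, b + c0)"
  by (simp add: blk_def)

lemma E_right: assumes "M \<in> carrier_mat p r" "s + c \<le> r" shows "M * Esh r c s = blk 0 s p c M"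
proof (rule eq_matI)
  fix a b assume ab: "a < dim_row (blk 0 s p c M)" "b < dim_col (blk 0 s p c M)"
  have "(M * Esh r c s) $$ (a,b) = (\<Sum>k<r. M $$ (a,k) * Esh r c s $$ (k,b))"
    using assms ab by (simp add: sp_entry)
  also have "\<dots> = M $$ (a, b + s)"
    using assms ab by (subst sum_single[where t="b+s"]) auto
  finally show "(M * Esh r c s) $$ (a,b) = blk 0 s p c M $$ (a,b)" using ab by simp
qed (use assms in auto)

lemma E_left_adj: assumes "M \<in> carrier_mat r q" "s + c \<le> r" shows "mat_adjoint (Esh r c s) * M = blk s 0 c q M"
proof (rule eq_matI)
  fix a b assume ab: "a < dim_row (blk s 0 c q M)" "b < dim_col (blk s 0 c q M)"
  have "(mat_adjoint (Esh r c s) * M) $$ (a,b) = (\<Sum>k<r. mat_adjoint (Esh r c s) $$ (a,k) * M $$ (k,b))"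
    using assms ab by (simp add: sp_entry)
  also have "\<dots> = M $$ (a + s, b)"
    using assms ab by (subst sum_single[where t="a+s"]) auto
  finally show "(mat_adjoint (Esh r c s) * M) $$ (a,b) = blk s 0 c q M $$ (a,b)" using ab by simp
qed (use assms in auto)

lemma E_left: assumes "M \<in> carrier_mat c q"
  shows "Esh r c s * M = mat r q (\<lambda>(a,b). if s \<le> a \<and> a < s + c then M $$ (a - s, b) else 0)"
proof (rule eq_matI)
  fix a b assume ab: "a < dim_row (mat r q (\<lambda>(a,b). if s \<le> a \<and> a < s + c then M $$ (a - s, b) else 0))"
     "b < dim_col (mat r q (\<lambda>(a,b). if s \<le> a \<and> a < s + c then M $$ (a - s, b) else 0))"
  have "(Esh r c s * M) $$ (a,b) = (\<Sum>k<c. Esh r c s $$ (a,k) * M $$ (k,b))"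
    using assms ab by (simp add: sp_entry)
  also have "\<dots> = (if s \<le> a \<and> a < s + c then M $$ (a - s, b) else 0)"
    using assms ab by (subst sum_single[where t="a-s"]) auto
  finally show "(Esh r c s * M) $$ (a,b) = mat r q (\<lambda>(a,b). if s \<le> a \<and> a < s + c then M $$ (a - s, b) else 0) $$ (a,b)" using ab by simp
qed (use assms in auto)

lemma E_right_adj: assumes "M \<in> carrier_mat p c"
  shows "M * mat_adjoint (Esh r c s) = mat p r (\<lambda>(a,b). if s \<le> b \<and> b < s + c then M $$ (a, b - s) else 0)"
proof (rule eq_matI)
  fix a b assume ab: "a < dim_row (mat p r (\<lambda>(a,b). if s \<le> b \<and> b < s + c then M $$ (a, b - s) else 0))"
     "b < dim_col (mat p r (\<lambda>(a,b). if s \<le> b \<and> b < s + c then M $$ (a, b - s) else 0))"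
  have "(M * mat_adjoint (Esh r c s)) $$ (a,b) = (\<Sum>k<c. M $$ (a,k) * mat_adjoint (Esh r c s) $$ (k,b))"
    using assms ab by (simp add: sp_entry)
  also have "\<dots> = (if s \<le> b \<and> b < s + c then M $$ (a, b - s) else 0)"
    using assms ab by (subst sum_single[where t="b-s"]) auto
  finally show "(M * mat_adjoint (Esh r c s)) $$ (a,b) = mat p r (\<lambda>(a,b). if s \<le> b \<and> b < s + c then M $$ (a, b - s) else 0) $$ (a,b)" using ab by simp
qed (use assms in auto)

lemma Esh_orth: "s + c \<le> r \<Longrightarrow> mat_adjoint (Esh r c s) * Esh r c s = 1\<^sub>m c"
  by (subst E_left_adj[of _ r c]) (auto intro!: eq_matI)

lemma Esh_comp: "t + d \<le> c \<Longrightarrow> Esh r c s * Esh c d t = Esh r d (s + t)"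
  by (subst E_left[of _ c d]) (auto intro!: eq_matI)


lemma sum_block: assumes "\<And>k. k < (N::nat) \<Longrightarrow> \<not>(s \<le> k \<and> k < s + c) \<Longrightarrow> f k = 0" "s + c \<le> N"
  shows "(\<Sum>k<N. f k) = (\<Sum>k<c. f (k + s))"
proof -
  have "(\<Sum>k<N. f k) = (\<Sum>k\<in>{s..<s+c}. f k)"
    by (rule sum.mono_neutral_right) (use assms in auto)
  also have "\<dots> = (\<Sum>k\<in>{0..<c}. f (k + s))"
    using sum.shift_bounds_nat_ivl[of f 0 s c] by (simp add: add.commute)
  finally show ?thesis by (simp add: atLeast0LessThan)
qed

lemma Qemb_carrier[simp]: "Qemb L m i Om \<in> carrier_mat (m*L) (m*L)"
  and Qemb_dims[simp]: "dim_row (Qemb L m i Om) = m*L" "dim_col (Qemb L m i Om) = m*L"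
  by (auto simp: Qemb_def)

lemma Qemb_unitary:
  assumes Om: "Om \<in> carrier_mat (2*L) (2*L)" "mat_adjoint Om * Om = 1\<^sub>m (2*L)"
    and i: "1 \<le> i" "i + 1 \<le> m"
  shows "mat_adjoint (Qemb L m i Om) * Qemb L m i Om = 1\<^sub>m (m*L)"
proof (rule eq_matI)
  let ?Q = "Qemb L m i Om" let ?s = "(i-1)*L"
  have sc: "?s + 2*L = (i+1)*L" using i by (cases i) (auto simp: algebra_simps)
  have le: "(i+1)*L \<le> m*L" using i by (intro mult_le_mono1) simp
  have Qe: "\<And>a b. a < m*L \<Longrightarrow> b < m*L \<Longrightarrow> ?Q $$ (a,b) = (if ?s \<le> a \<and> a < ?s + 2*L \<and> ?s \<le> b \<and> b < ?s + 2*L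
     then Om $$ (a - ?s, b - ?s) else if a = b then 1 else 0)"
    unfolding Qemb_def sc by simp
  fix a b assume ab: "a < dim_row (1\<^sub>m (m*L) :: cm)" "b < dim_col (1\<^sub>m (m*L) :: cm)"
  hence ab: "a < m*L" "b < m*L" by auto
  have e: "(mat_adjoint ?Q * ?Q) $$ (a,b) = (\<Sum>k<m*L. cnj (?Q $$ (k,a)) * ?Q $$ (k,b))"
    using ab by simp
  show "(mat_adjoint ?Q * ?Q) $$ (a,b) = 1\<^sub>m (m*L) $$ (a,b)"
  proof (cases "?s \<le> a \<and> a < ?s + 2*L")
    case ina: True
    show ?thesis
    proof (cases "?s \<le> b \<and> b < ?s + 2*L")
      case inb: True
      have "(\<Sum>k<m*L. cnj (?Q $$ (k,a)) * ?Q $$ (k,b)) = (\<Sum>k<2*L. cnj (?Q $$ (k + ?s,a)) * ?Q $$ (k + ?s,b))"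
        by (rule sum_block) (use ab ina inb sc le in \<open>auto simp: Qe\<close>)
      also have "\<dots> = (\<Sum>k<2*L. cnj (Om $$ (k, a - ?s)) * Om $$ (k, b - ?s))"
        by (rule sum.cong) (use ab ina inb sc le in \<open>auto simp: Qe\<close>)
      also have "\<dots> = (mat_adjoint Om * Om) $$ (a - ?s, b - ?s)"
        using Om(1) ina inb by (simp add: less_diff_conv2)
      also have "\<dots> = 1\<^sub>m (m*L) $$ (a,b)" using Om(2) ina inb ab by auto
      finally show ?thesis using e by simp
    next
      case inb: False
      have "(\<Sum>k<m*L. cnj (?Q $$ (k,a)) * ?Q $$ (k,b)) = 0"
      proof (rule sum.neutral, intro ballI)
        fix k assume k: "k \<in> {..<m*L}"
        show "cnj (?Q $$ (k,a)) * ?Q $$ (k,b) = 0"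
        proof (cases "?s \<le> k \<and> k < ?s + 2*L")
          case True
          hence "k \<noteq> b" using inb by auto
          hence "?Q $$ (k,b) = 0" using Qe[of k b] k ab inb by auto
          thus ?thesis by simp
        next
          case False
          hence "k \<noteq> a" using ina by auto
          hence "?Q $$ (k,a) = 0" using Qe[of k a] k ab False by auto
          thus ?thesis by simp
        qed
      qed
      thus ?thesis using e ina inb ab by auto
    qed
  next
    case ina: False
    have "(\<Sum>k<m*L. cnj (?Q $$ (k,a)) * ?Q $$ (k,b)) = (if a < m*L then cnj (?Q $$ (a,a)) * ?Q $$ (a,b) else 0)"
    proof (rule sum_single)
      fix k assume k: "k < m*L" "k \<noteq> a"
      hence "?Q $$ (k,a) = 0" using Qe[of k a] ab ina by auto
      thus "cnj (?Q $$ (k,a)) * ?Q $$ (k,b) = 0" by simp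
    qed
    moreover have "?Q $$ (a,a) = 1" using Qe[of a a] ab ina by auto
    moreover have "?Q $$ (a,b) = (if a = b then 1 else 0)" using Qe[of a b] ab ina by auto
    ultimately show ?thesis using e ab by simp
  qed
qed auto


lemma onc_mult: assumes A: "(A::cm) \<in> carrier_mat p q" and B: "B \<in> carrier_mat q r"
  and oA: "mat_adjoint A * A = 1\<^sub>m q" and oB: "mat_adjoint B * B = 1\<^sub>m r"
  shows "mat_adjoint (A*B) * (A*B) = 1\<^sub>m r"
proof -
  have e1: "mat_adjoint (A*B) * (A*B) = (mat_adjoint B * mat_adjoint A) * (A*B)"
    using A B by (simp add: adj_mult)
  have e2: "(mat_adjoint B * mat_adjoint A) * (A*B) = mat_adjoint B * (mat_adjoint A * (A * B))"
    by (rule assoc_mult_mat[of _ r q _ p _ r]) (use A B in auto)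
  have e3: "mat_adjoint A * (A * B) = (mat_adjoint A * A) * B"
    by (rule assoc_mult_mat[symmetric, of _ q p _ q _ r]) (use A B in auto)
  show ?thesis unfolding e1 e2 e3 oA using B oB by simp
qed

lemma sq_right_inv: "(Q::cm) \<in> carrier_mat n n \<Longrightarrow> mat_adjoint Q * Q = 1\<^sub>m n \<Longrightarrow> Q * mat_adjoint Q = 1\<^sub>m n"
  by (rule mat_mult_left_right_inverse[of "mat_adjoint Q" n Q]) auto

lemma prodQ_carrier[simp]: "prodQ L Om m i \<in> carrier_mat (m*L) (m*L)"
  by (induction i) auto

lemma prodQ_unitary: "(\<forall>i'\<in>{1..i}. Om i' \<in> carrier_mat (2*L) (2*L) \<and> mat_adjoint (Om i') * Om i' = 1\<^sub>m (2*L))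
   \<Longrightarrow> i + 1 \<le> m \<Longrightarrow> mat_adjoint (prodQ L Om m i) * prodQ L Om m i = 1\<^sub>m (m*L)"
proof (induction i)
  case 0 then show ?case by simp
next
  case (Suc i)
  have u: "mat_adjoint (Qemb L m (Suc i) (Om (Suc i))) * Qemb L m (Suc i) (Om (Suc i)) = 1\<^sub>m (m*L)"
    by (rule Qemb_unitary) (use Suc.prems in auto)
  have "mat_adjoint (prodQ L Om m i) * prodQ L Om m i = 1\<^sub>m (m*L)"
    by (rule Suc.IH) (use Suc.prems in auto)
  then show ?case using u by (simp add: onc_mult[of _ "m*L" "m*L"])
qed

lemma Qemb_emb: assumes "i + 1 \<le> k"
  shows "Qemb L (k+1) i Om * Esh ((k+1)*L) (k*L) 0 = Esh ((k+1)*L) (k*L) 0 * Qemb L k i Om"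
proof -
  have le: "(i+1)*L \<le> k*L" using assms by (rule mult_le_mono1)
  have kk: "k*L \<le> (k+1)*L" by simp
  have m: "blk 0 0 ((k+1)*L) (k*L) (Qemb L (k+1) i Om) = mat ((k+1)*L) (k*L)
     (\<lambda>(a,b). if 0 \<le> a \<and> a < 0 + k*L then Qemb L k i Om $$ (a - 0, b) else 0)"
  proof (rule eq_matI)
    fix a b assume ab: "a < dim_row (mat ((k+1)*L) (k*L)
     (\<lambda>(a,b). if 0 \<le> a \<and> a < 0 + k*L then Qemb L k i Om $$ (a - 0, b) else 0))"
      "b < dim_col (mat ((k+1)*L) (k*L)
     (\<lambda>(a,b). if 0 \<le> a \<and> a < 0 + k*L then Qemb L k i Om $$ (a - 0, b) else 0))"
    hence a: "a < (k+1)*L" and b: "b < k*L" by simp_all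
    have b1: "b < (k+1)*L" using b kk by linarith
    show "blk 0 0 ((k+1)*L) (k*L) (Qemb L (k+1) i Om) $$ (a,b) = mat ((k+1)*L) (k*L)
     (\<lambda>(a,b). if 0 \<le> a \<and> a < 0 + k*L then Qemb L k i Om $$ (a - 0, b) else 0) $$ (a,b)"
    proof (cases "a < k*L")
      case True
      then show ?thesis using a b b1 unfolding Qemb_def by simp
    next
      case False
      hence "\<not> a < (i+1)*L" "a \<noteq> b" using le b by linarith+
      then show ?thesis using a b b1 False unfolding Qemb_def by simp
    qed
  qed simp_all
  have r: "Qemb L (k+1) i Om * Esh ((k+1)*L) (k*L) 0 = blk 0 0 ((k+1)*L) (k*L) (Qemb L (k+1) i Om)"
    by (rule E_right[OF Qemb_carrier]) simp
  have l: "Esh ((k+1)*L) (k*L) 0 * Qemb L k i Om = mat ((k+1)*L) (k*L)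
     (\<lambda>(a,b). if 0 \<le> a \<and> a < 0 + k*L then Qemb L k i Om $$ (a - 0, b) else 0)"
    by (rule E_left[OF Qemb_carrier])
  show ?thesis unfolding r l by (rule m)
qed

lemma prodQ_emb: "i < k \<Longrightarrow> prodQ L Om (k+1) i * Esh ((k+1)*L) (k*L) 0 = Esh ((k+1)*L) (k*L) 0 * prodQ L Om k i"
proof (induction i)
  case 0 then show ?case by simp
next
  case (Suc i)
  let ?E = "Esh ((k+1)*L) (k*L) 0"
  let ?Q1 = "Qemb L (k+1) (Suc i) (Om (Suc i))"
  let ?Q0 = "Qemb L k (Suc i) (Om (Suc i))"
  have c1: "?Q1 \<in> carrier_mat ((k+1)*L) ((k+1)*L)" "prodQ L Om (k+1) i \<in> carrier_mat ((k+1)*L) ((k+1)*L)"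
    "?E \<in> carrier_mat ((k+1)*L) (k*L)" "prodQ L Om k i \<in> carrier_mat (k*L) (k*L)"
    "?Q0 \<in> carrier_mat (k*L) (k*L)" by (rule Qemb_carrier prodQ_carrier Esh_carrier)+
  have ih: "prodQ L Om (k+1) i * ?E = ?E * prodQ L Om k i" by (rule Suc.IH) (use Suc.prems in simp)
  have "prodQ L Om (k+1) (Suc i) * ?E = (?Q1 * prodQ L Om (k+1) i) * ?E"
    by (simp only: prodQ.simps)
  also have "\<dots> = ?Q1 * (prodQ L Om (k+1) i * ?E)"
    by (rule assoc_mult_mat[OF c1(1) c1(2) c1(3)])
  also have "\<dots> = ?Q1 * (?E * prodQ L Om k i)" by (simp only: ih)
  also have "\<dots> = (?Q1 * ?E) * prodQ L Om k i"
    by (rule assoc_mult_mat[symmetric, OF c1(1) c1(3) c1(4)])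
  also have "?Q1 * ?E = ?E * ?Q0" by (rule Qemb_emb) (use Suc in simp)
  also have "(?E * ?Q0) * prodQ L Om k i = ?E * (?Q0 * prodQ L Om k i)"
    by (rule assoc_mult_mat[OF c1(3) c1(5) c1(4)])
  also have "?Q0 * prodQ L Om k i = prodQ L Om k (Suc i)" by (simp only: prodQ.simps)
  finally show ?case .
qed


lemma col_in_colspace: assumes X: "(X::cm) \<in> carrier_mat n r" and i: "i < r" shows "col X i \<in> colspace X"
proof -
  have "col X i = col (X * 1\<^sub>m r) i" using X by simp
  also have "\<dots> = X *\<^sub>v unit_vec r i" using X i by (subst col_mult2[of _ n r]) auto
  finally show ?thesis unfolding colspace_def using X by auto
qed

lemma colspace_mult_sub: assumes A: "(A::cm) \<in> carrier_mat p q" and B: "B \<in> carrier_mat q r"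
  shows "colspace (A * B) \<subseteq> colspace A"
proof
  fix v assume "v \<in> colspace (A*B)"
  then obtain x where x: "x \<in> carrier_vec r" "v = (A*B) *\<^sub>v x" unfolding colspace_def using A B by auto
  hence "v = A *\<^sub>v (B *\<^sub>v x)" using A B by simp
  moreover have "B *\<^sub>v x \<in> carrier_vec q" by (rule mult_mat_vec_carrier[OF B x(1)])
  ultimately show "v \<in> colspace A" unfolding colspace_def using A by auto
qed

lemma proj_eq: assumes Z: "(Z::cm) \<in> carrier_mat n q" and oZ: "mat_adjoint Z * Z = 1\<^sub>m q"
  and X: "X \<in> carrier_mat n r" and sub: "colspace X \<subseteq> colspace Z"
  shows "Z * (mat_adjoint Z * X) = X"
proof (rule mat_col_eqI)
  fix i assume "i < dim_col X"
  hence i: "i < r" using X by simp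
  from sub col_in_colspace[OF X i] obtain y where y: "y \<in> carrier_vec q" "col X i = Z *\<^sub>v y"
    unfolding colspace_def using Z by auto
  have "col (Z * (mat_adjoint Z * X)) i = Z *\<^sub>v (mat_adjoint Z *\<^sub>v col X i)"
  proof -
    have M: "mat_adjoint Z * X \<in> carrier_mat q r" by (rule mult_carrier_mat[OF adj_carrier[OF Z] X])
    have "col (Z * (mat_adjoint Z * X)) i = Z *\<^sub>v col (mat_adjoint Z * X) i" by (rule col_mult2[OF Z M i])
    also have "col (mat_adjoint Z * X) i = mat_adjoint Z *\<^sub>v col X i" by (rule col_mult2[OF adj_carrier[OF Z] X i])
    finally show ?thesis .
  qed
  also have "\<dots> = Z *\<^sub>v ((mat_adjoint Z * Z) *\<^sub>v y)" using y Z by (simp add: assoc_mult_mat_vec[OF adj_carrier[OF Z] Z y(1)])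
  also have "\<dots> = col X i" using oZ y by simp
  finally show "col (Z * (mat_adjoint Z * X)) i = col X i" .
qed (use Z X in auto)


lemma massoc: "dim_col A = dim_row B \<Longrightarrow> dim_col B = dim_row C \<Longrightarrow> (A::'a::semiring_0 mat) * B * C = A * (B * C)"
  by (rule assoc_mult_mat[of A "dim_row A" "dim_col A" B "dim_col B" C "dim_col C"]) auto

lemma mcancel: "P * Q = 1\<^sub>m k \<Longrightarrow> dim_col P = dim_row Q \<Longrightarrow> dim_col Q = dim_row X \<Longrightarrow> dim_row X = k
   \<Longrightarrow> (P::'a::semiring_1 mat) * (Q * X) = X"
  by (subst massoc[symmetric]) auto

lemma blk_full: "M \<in> carrier_mat r c \<Longrightarrow> blk 0 0 r c M = M"
  by (rule eq_matI) auto

lemma has_inverse: assumes R: "(R::cm) \<in> carrier_mat k k" and d: "det R \<noteq> 0"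
  shows "\<exists>Ri \<in> carrier_mat k k. R * Ri = 1\<^sub>m k"
proof -
  from det_non_zero_imp_unit[OF R d, of "()"]
  obtain B where "B \<in> carrier_mat k k" "R * B = 1\<^sub>m k"
    unfolding Units_def ring_mat_def by auto
  thus ?thesis by blast
qed

lemma sum_split: "(\<Sum>k<a+b. f k) = (\<Sum>k<a. f k) + (\<Sum>k<b. f (k+(a::nat)))"
  by (induction b) (auto simp: add.commute add.left_commute)

lemma CS_block: assumes Om: "(Om::cm) \<in> carrier_mat (2*L) (2*L)" "mat_adjoint Om * Om = 1\<^sub>m (2*L)"
  shows "mat_adjoint (blk 0 0 L L Om) * blk 0 0 L L Om + mat_adjoint (blk L 0 L L Om) * blk L 0 L L Om = 1\<^sub>m L"
proof (rule eq_matI)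
  fix a b assume ab: "a < dim_row (1\<^sub>m L :: cm)" "b < dim_col (1\<^sub>m L :: cm)"
  hence ab: "a < L" "b < L" by auto
  have "1\<^sub>m L $$ (a,b) = (mat_adjoint Om * Om) $$ (a,b)" using Om(2) ab by simp
  also have "\<dots> = (\<Sum>k<L+L. cnj (Om $$ (k,a)) * Om $$ (k,b))" using Om(1) ab by (simp add: mult_2)
  also have "\<dots> = (\<Sum>k<L. cnj (Om $$ (k,a)) * Om $$ (k,b)) + (\<Sum>k<L. cnj (Om $$ (k+L,a)) * Om $$ (k+L,b))"
    by (rule sum_split)
  also have "\<dots> = (mat_adjoint (blk 0 0 L L Om) * blk 0 0 L L Om + mat_adjoint (blk L 0 L L Om) * blk L 0 L L Om) $$ (a,b)"
    using ab by simp
  finally show "(mat_adjoint (blk 0 0 L L Om) * blk 0 0 L L Om + mat_adjoint (blk L 0 L L Om) * blk L 0 L L Om) $$ (a,b) = 1\<^sub>m L $$ (a,b)" by simp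
qed simp_all

lemma gram_00: assumes X: "(X::cm) \<in> carrier_mat q 1"
  shows "(mat_adjoint X * X) $$ (0,0) = of_real (\<Sum>k<q. (cmod (X $$ (k,0)))^2)"
proof -
  have "(mat_adjoint X * X) $$ (0,0) = (\<Sum>k<q. cnj (X $$ (k,0)) * X $$ (k,0))" using X by simp
  also have "\<dots> = (\<Sum>k<q. of_real ((cmod (X $$ (k,0)))^2))"
    by (rule sum.cong) (auto simp: complex_norm_square[symmetric] mult.commute)
  finally show ?thesis by simp
qed


lemma eig_le1: assumes G: "(G::cm) \<in> carrier_mat L L" and P: "P \<in> carrier_mat q L"
  and GP: "G + mat_adjoint P * P = 1\<^sub>m L" and root: "poly (char_poly G) z = 0"
  and P1: "P1 \<in> carrier_mat q1 L" and G1: "G = mat_adjoint P1 * P1"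
  shows "0 \<le> Re z \<and> Re z \<le> 1"
proof -
  from root eigenvalue_root_char_poly[OF G] have "eigenvalue G z" by simp
  then obtain v where v: "v \<in> carrier_vec L" "v \<noteq> 0\<^sub>v L" "G *\<^sub>v v = z \<cdot>\<^sub>v v"
    unfolding eigenvalue_def eigenvector_def using G by auto
  define V where "V = mat L 1 (\<lambda>(i,_). v $ i)"
  have V: "V \<in> carrier_mat L 1" unfolding V_def by simp
  have colV: "col V 0 = v" unfolding V_def using v by (auto intro!: eq_vecI)
  have GV: "G * V = z \<cdot>\<^sub>m V"
  proof (rule eq_matI)
    fix i k assume ik: "i < dim_row (z \<cdot>\<^sub>m V)" "k < dim_col (z \<cdot>\<^sub>m V)"
    hence i: "i < L" and k0: "k = 0" using V by auto
    have "(G * V) $$ (i,k) = row G i \<bullet> col V 0" using G V i k0 by simp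
    also have "\<dots> = (G *\<^sub>v v) $ i" using colV G i by simp
    also have "\<dots> = z * v $ i" using v i by simp
    finally show "(G * V) $$ (i,k) = (z \<cdot>\<^sub>m V) $$ (i,k)" using i k0 V unfolding V_def by simp
  qed (use G V in auto)
  have PV: "P * V \<in> carrier_mat q 1" using P V by simp
  have P1V: "P1 * V \<in> carrier_mat q1 1" using P1 V by simp
  have zG: "mat_adjoint V * (G * V) = z \<cdot>\<^sub>m (mat_adjoint V * V)" unfolding GV
    using V by (simp add: mult_smult_distrib[of _ 1 L])
  have "mat_adjoint V * V = mat_adjoint V * ((G + mat_adjoint P * P) * V)" using GP V by simp
  also have "\<dots> = mat_adjoint V * (G * V) + mat_adjoint V * ((mat_adjoint P * P) * V)"
  proof -
    have PP: "mat_adjoint P * P \<in> carrier_mat L L" by (rule mult_carrier_mat[OF adj_carrier[OF P] P])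
    have "(G + mat_adjoint P * P) * V = G * V + (mat_adjoint P * P) * V"
      by (rule add_mult_distrib_mat[OF G PP V])
    moreover have "mat_adjoint V * (G * V + (mat_adjoint P * P) * V) = mat_adjoint V * (G * V) + mat_adjoint V * ((mat_adjoint P * P) * V)"
      by (rule mult_add_distrib_mat[OF adj_carrier[OF V] mult_carrier_mat[OF G V] mult_carrier_mat[OF PP V]])
    ultimately show ?thesis by simp
  qed
  also have "mat_adjoint V * (G * V) = z \<cdot>\<^sub>m (mat_adjoint V * V)" by (rule zG)
  also have "mat_adjoint V * ((mat_adjoint P * P) * V) = mat_adjoint (P * V) * (P * V)"
    using P V by (simp add: adj_mult massoc)
  finally have eq: "mat_adjoint V * V = z \<cdot>\<^sub>m (mat_adjoint V * V) + mat_adjoint (P * V) * (P * V)" .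
  have eq1: "z \<cdot>\<^sub>m (mat_adjoint V * V) = mat_adjoint (P1 * V) * (P1 * V)"
    unfolding zG[symmetric] G1 using P1 V by (simp add: adj_mult massoc)
  define s where "s = (\<Sum>k<L. (cmod (V $$ (k,0)))^2)"
  define r where "r = (\<Sum>k<q. (cmod ((P*V) $$ (k,0)))^2)"
  define r1 where "r1 = (\<Sum>k<q1. (cmod ((P1*V) $$ (k,0)))^2)"
  have "(mat_adjoint V * V) $$ (0,0) = (z \<cdot>\<^sub>m (mat_adjoint V * V) + mat_adjoint (P * V) * (P * V)) $$ (0,0)"
    using eq by simp
  hence "of_real s = z * of_real s + of_real r"
    unfolding s_def r_def gram_00[OF V, symmetric] gram_00[OF PV, symmetric] using V PV by simp
  hence "Re (of_real s) = Re (z * of_real s + of_real r)" by (rule arg_cong)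
  hence sr: "s = Re z * s + r" by simp
  have "(z \<cdot>\<^sub>m (mat_adjoint V * V)) $$ (0,0) = (mat_adjoint (P1 * V) * (P1 * V)) $$ (0,0)"
    using eq1 by simp
  hence "z * of_real s = of_real r1"
    unfolding s_def r1_def gram_00[OF V, symmetric] gram_00[OF P1V, symmetric] using V P1V by simp
  hence "Re (z * of_real s) = Re (of_real r1)" by (rule arg_cong)
  hence sr1: "Re z * s = r1" by simp
  have r0: "r \<ge> 0" unfolding r_def by (simp add: sum_nonneg)
  have r10: "r1 \<ge> 0" unfolding r1_def by (simp add: sum_nonneg)
  obtain k where k: "k < L" "v $ k \<noteq> 0" using v by (metis eq_vecI carrier_vecD index_zero_vec)
  have "s \<ge> (cmod (V $$ (k,0)))^2" unfolding s_def
    by (rule member_le_sum) (use k in auto)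
  moreover have "(cmod (V $$ (k,0)))^2 > 0" using k unfolding V_def by simp
  ultimately have "s > 0" by linarith
  moreover have "Re z * s \<le> 1 * s" using sr r0 by linarith
  moreover have "0 * s \<le> Re z * s" using sr1 r10 by simp
  ultimately show ?thesis by (simp add: mult_le_cancel_right zero_le_mult_iff)
qed

lemma proots_lin_prod: "proots (\<Prod>a\<leftarrow>xs. [:- a, 1:]) = mset (xs :: complex list)"
proof (induction xs)
  case Nil then show ?case by simp
next
  case (Cons x xs)
  have nz: "(\<Prod>a\<leftarrow>xs. [:- a, 1:]) \<noteq> (0 :: complex poly)"
    by (auto simp: prod_list_zero_iff)
  have e: "(\<Prod>a\<leftarrow>x#xs. [:- a, 1:]) = [:- x, 1:] * (\<Prod>a\<leftarrow>xs. [:- a, 1:])" by simp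
  have "proots ([:- x, 1:] * (\<Prod>a\<leftarrow>xs. [:- a, 1:])) = proots [:- x, 1:] + proots (\<Prod>a\<leftarrow>xs. [:- a, 1:])"
    by (rule proots_mult) (use nz in auto)
  also have "\<dots> = {#x#} + mset xs" using Cons proots_linear_factor[of "-x"] by simp
  finally show ?case unfolding e by simp
qed

lemma proots_char_poly_diag: "proots (char_poly (mat L L (\<lambda>(a,b). if a = b then d a else 0) :: cm)) = mset (map d [0..<L])"
proof -
  let ?D = "mat L L (\<lambda>(a,b). if a = b then d a else 0) :: cm"
  have "char_poly ?D = (\<Prod>a\<leftarrow>diag_mat ?D. [:- a, 1:])"
    by (rule char_poly_upper_triangular[of _ L]) (auto simp: upper_triangular_def)
  moreover have "diag_mat ?D = map d [0..<L]" unfolding diag_mat_def by auto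
  ultimately have "char_poly ?D = (\<Prod>a\<leftarrow>map d [0..<L]. [:- a, 1:])" by simp
  thus ?thesis by (simp only: proots_lin_prod)
qed

lemma char_poly_nz: "(G::cm) \<in> carrier_mat k k \<Longrightarrow> char_poly G \<noteq> 0"
  using degree_monic_char_poly[of G k] by auto

lemma singvals_le1: assumes Om: "(Om::cm) \<in> carrier_mat (2*L) (2*L)" "mat_adjoint Om * Om = 1\<^sub>m (2*L)"
  and x: "x \<in># singvals (blk 0 0 L L Om)"
  shows "0 \<le> x \<and> x \<le> 1"
proof -
  let ?G = "mat_adjoint (blk 0 0 L L Om) * blk 0 0 L L Om"
  have G: "?G \<in> carrier_mat L L" by (rule mult_carrier_mat[OF adj_carrier[OF blk_carrier] blk_carrier])
  from x obtain z where z: "z \<in># proots (char_poly ?G)" "x = sqrt (Re z)" unfolding singvals_def by auto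
  have "poly (char_poly ?G) z = 0" using z(1) char_poly_nz[OF G] by simp
  from eig_le1[OF G blk_carrier CS_block[OF Om] this blk_carrier refl] have "0 \<le> Re z \<and> Re z \<le> 1" by simp
  thus ?thesis using z(2) by simp
qed

lemma cos_arccos_singvals: assumes Om: "(Om::cm) \<in> carrier_mat (2*L) (2*L)" "mat_adjoint Om * Om = 1\<^sub>m (2*L)"
  shows "image_mset cos (image_mset arccos (singvals (blk 0 0 L L Om))) = singvals (blk 0 0 L L Om)"
proof -
  have "image_mset (cos \<circ> arccos) (singvals (blk 0 0 L L Om)) = image_mset id (singvals (blk 0 0 L L Om))"
  proof (rule multiset.map_cong0)
    fix z assume "z \<in> set_mset (singvals (blk 0 0 L L Om))"
    hence "0 \<le> z \<and> z \<le> 1" using singvals_le1[OF Om] by auto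
    thus "(cos \<circ> arccos) z = id z" by simp
  qed
  thus ?thesis by (simp add: multiset.map_comp)
qed

lemma singvals_sim: assumes M: "(M::cm) \<in> carrier_mat p L" and K: "K \<in> carrier_mat q L"
  and T: "T \<in> carrier_mat L L" "mat_adjoint T * T = 1\<^sub>m L"
  and eq: "mat_adjoint M * M = mat_adjoint T * (mat_adjoint K * K) * T"
  shows "singvals M = singvals K"
proof -
  have "similar_mat (mat_adjoint M * M) (mat_adjoint K * K)"
    unfolding similar_mat_def similar_mat_wit_def Let_def
    by (rule exI[of _ "mat_adjoint T"], rule exI[of _ T]) (use M K T sq_right_inv[OF T] eq in auto)
  thus ?thesis unfolding singvals_def by (simp add: char_poly_similar)
qed


lemma diag_gram: assumes C: "(C::cm) \<in> carrier_mat L L" and dC: "real_nonneg_diag C"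
  shows "mat_adjoint C * C = mat L L (\<lambda>(a,b). if a = b then complex_of_real ((Re (C $$ (a,a)))^2) else 0)"
proof (rule eq_matI)
  fix a b assume ab: "a < dim_row (mat L L (\<lambda>(a,b). if a = b then complex_of_real ((Re (C $$ (a,a)))^2) else 0))"
    "b < dim_col (mat L L (\<lambda>(a,b). if a = b then complex_of_real ((Re (C $$ (a,a)))^2) else 0))"
  hence ab: "a < L" "b < L" by auto
  have dz: "\<And>x y. x < L \<Longrightarrow> y < L \<Longrightarrow> x \<noteq> y \<Longrightarrow> C $$ (x,y) = 0" using dC C unfolding real_nonneg_diag_def by auto
  have dr: "\<And>x. x < L \<Longrightarrow> Im (C $$ (x,x)) = 0" using dC C unfolding real_nonneg_diag_def
    by auto
  have "(mat_adjoint C * C) $$ (a,b) = (\<Sum>k<L. cnj (C $$ (k,a)) * C $$ (k,b))" using C ab by simp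
  also have "\<dots> = (if a < L then cnj (C $$ (a,a)) * C $$ (a,b) else 0)"
    by (rule sum_single) (use dz ab in auto)
  also have "\<dots> = (if a = b then complex_of_real ((Re (C $$ (a,a)))^2) else 0)"
    using ab dz[of a b] dr[of a] by (cases "a = b") (auto simp: power2_eq_square complex_eq_iff)
  finally show "(mat_adjoint C * C) $$ (a,b) = mat L L (\<lambda>(a,b). if a = b then complex_of_real ((Re (C $$ (a,a)))^2) else 0) $$ (a,b)"
    using ab by simp
qed (use C in auto)

lemma singvals_CS: assumes U1: "(U1::cm) \<in> carrier_mat L L" "mat_adjoint U1 * U1 = 1\<^sub>m L"
  and V: "V \<in> carrier_mat L L" "mat_adjoint V * V = 1\<^sub>m L"
  and C: "C \<in> carrier_mat L L" "real_nonneg_diag C"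
  and Q: "Q = U1 * C * mat_adjoint V"
  shows "singvals Q = mset (map (\<lambda>a. Re (C $$ (a,a))) [0..<L])"
proof -
  let ?D = "mat L L (\<lambda>(a,b). if a = b then complex_of_real ((Re (C $$ (a,a)))^2) else 0) :: cm"
  have dims: "dim_row U1 = L" "dim_col U1 = L" "dim_row V = L" "dim_col V = L" "dim_row C = L" "dim_col C = L"
    using U1 V C by auto
  have "mat_adjoint Q * Q = V * (mat_adjoint C * (mat_adjoint U1 * (U1 * (C * mat_adjoint V))))"
    unfolding Q using dims by (simp add: adj_mult massoc)
  also have "mat_adjoint U1 * (U1 * (C * mat_adjoint V)) = C * mat_adjoint V"
    by (rule mcancel[OF U1(2)]) (use dims in auto)
  also have "V * (mat_adjoint C * (C * mat_adjoint V)) = V * ?D * mat_adjoint V"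
    unfolding diag_gram[OF C, symmetric] using dims by (simp add: massoc)
  finally have e: "mat_adjoint Q * Q = V * ?D * mat_adjoint V" .
  have "similar_mat (mat_adjoint Q * Q) ?D"
    unfolding similar_mat_def similar_mat_wit_def Let_def
    by (rule exI[of _ V], rule exI[of _ "mat_adjoint V"]) (use V sq_right_inv[OF V] e in auto)
  hence "char_poly (mat_adjoint Q * Q) = char_poly ?D" by (rule char_poly_similar)
  hence "singvals Q = image_mset (\<lambda>z. sqrt (Re z)) (mset (map (\<lambda>a. complex_of_real ((Re (C $$ (a,a)))^2)) [0..<L]))"
    unfolding singvals_def by (simp only: proots_char_poly_diag)
  also have "\<dots> = mset (map (\<lambda>a. Re (C $$ (a,a))) [0..<L])"
  proof -
    have nn: "\<And>a. a < L \<Longrightarrow> Re (C $$ (a,a)) \<ge> 0" using C unfolding real_nonneg_diag_def by auto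
    have "image_mset (\<lambda>z. sqrt (Re z)) (mset (map (\<lambda>a. complex_of_real ((Re (C $$ (a,a)))^2)) [0..<L]))
      = mset (map (\<lambda>z. sqrt (Re z)) (map (\<lambda>a. complex_of_real ((Re (C $$ (a,a)))^2)) [0..<L]))"
      by (simp only: mset_map)
    also have "\<dots> = mset (map (\<lambda>a. Re (C $$ (a,a))) [0..<L])"
      unfolding map_map by (rule arg_cong[where f=mset], rule map_cong) (use nn in auto)
    finally show ?thesis .
  qed
  finally show ?thesis .
qed


definition fs :: "cm \<Rightarrow> real" where
  "fs M = (\<Sum>a < dim_row M. \<Sum>b < dim_col M. (cmod (M $$ (a,b)))^2)"

lemma frob_fs: "frob_norm M = sqrt (fs M)" unfolding frob_norm_def fs_def ..

lemma fs_nonneg: "fs M \<ge> 0" unfolding fs_def by (intro sum_nonneg) auto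

lemma gram_bb: assumes b: "b < dim_col (M::cm)"
  shows "(mat_adjoint M * M) $$ (b,b) = of_real (\<Sum>a<dim_row M. (cmod (M $$ (a,b)))^2)"
proof -
  have "(mat_adjoint M * M) $$ (b,b) = (\<Sum>a<dim_row M. cnj (M $$ (a,b)) * M $$ (a,b))" using b by simp
  also have "\<dots> = (\<Sum>a<dim_row M. of_real ((cmod (M $$ (a,b)))^2))"
    by (rule sum.cong) (auto simp: complex_norm_square[symmetric] mult.commute)
  finally show ?thesis by simp
qed

lemma fs_gram: "fs M = (\<Sum>b < dim_col M. Re ((mat_adjoint M * M) $$ (b,b)))"
proof -
  have "fs M = (\<Sum>b < dim_col M. \<Sum>a < dim_row M. (cmod (M $$ (a,b)))^2)"
    unfolding fs_def by (rule sum.swap)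
  also have "\<dots> = (\<Sum>b < dim_col M. Re ((mat_adjoint M * M) $$ (b,b)))"
  proof (rule sum.cong[OF refl])
    fix b assume "b \<in> {..<dim_col M}"
    hence b: "b < dim_col M" by simp
    show "(\<Sum>a < dim_row M. (cmod (M $$ (a,b)))^2) = Re ((mat_adjoint M * M) $$ (b,b))"
      by (simp only: gram_bb[OF b] Re_complex_of_real)
  qed
  finally show ?thesis .
qed

lemma fs_unitary: assumes Q: "(Q::cm) \<in> carrier_mat k k" "mat_adjoint Q * Q = 1\<^sub>m k" and M: "M \<in> carrier_mat k c"
  shows "fs (Q * M) = fs M"
proof -
  have "mat_adjoint (Q*M) * (Q*M) = mat_adjoint M * (mat_adjoint Q * (Q * M))"
    using Q M by (simp add: adj_mult massoc)
  also have "mat_adjoint Q * (Q * M) = M" by (rule mcancel[OF Q(2)]) (use Q M in auto)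
  finally show ?thesis unfolding fs_gram using Q M by simp
qed

lemma ls_top_zero:
  assumes Qp: "(Qp::cm) \<in> carrier_mat m m" "mat_adjoint Qp * Qp = 1\<^sub>m m"
    and H1: "H1 \<in> carrier_mat m m1" and m1: "m1 \<le> m" and Z: "Z \<in> carrier_mat m L"
    and tri: "\<forall>a<m. \<forall>b<m1. b < a \<longrightarrow> (Qp * H1) $$ (a,b) = 0"
    and nz: "det (blk 0 0 m1 m1 (Qp * H1)) \<noteq> 0"
    and Y: "Y \<in> carrier_mat m1 L"
    and mn: "\<forall>Y' \<in> carrier_mat m1 L. frob_norm (H1 * Y - Z) \<le> frob_norm (H1 * Y' - Z)"
  shows "\<forall>a<m1. \<forall>b<L. (Qp * (H1 * Y - Z)) $$ (a,b) = 0"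
proof -
  let ?R = "blk 0 0 m1 m1 (Qp * H1)"
  obtain Ri where Ri: "Ri \<in> carrier_mat m1 m1" "?R * Ri = 1\<^sub>m m1" using has_inverse[OF blk_carrier nz] by blast
  let ?t = "blk 0 0 m1 L (Qp * Z)"
  define Y' where "Y' = Ri * ?t"
  have Y': "Y' \<in> carrier_mat m1 L" unfolding Y'_def using Ri by simp
  have QH: "Qp * H1 \<in> carrier_mat m m1" using Qp H1 by simp
  have QZ: "Qp * Z \<in> carrier_mat m L" using Qp Z by simp
  have PX: "Qp * (H1 * X - Z) = (Qp * H1) * X - Qp * Z" if X: "X \<in> carrier_mat m1 L" for X
  proof -
    have "Qp * (H1 * X - Z) = Qp * (H1 * X) - Qp * Z"
      by (rule mult_minus_distrib_mat[OF Qp(1) mult_carrier_mat[OF H1 X] Z])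
    also have "Qp * (H1 * X) = (Qp * H1) * X" using Qp H1 X by (simp add: massoc)
    finally show ?thesis .
  qed
  have low: "((Qp * H1) * X) $$ (a,b) = 0" if X: "X \<in> carrier_mat m1 L" and a: "m1 \<le> a" "a < m" and b: "b < L" for X a b
  proof -
    have "((Qp * H1) * X) $$ (a,b) = (\<Sum>c<m1. (Qp * H1) $$ (a,c) * X $$ (c,b))"
      by (subst mult_entry) (use QH X a b in auto)
    also have "\<dots> = 0" by (rule sum.neutral) (use tri a in auto)
    finally show ?thesis .
  qed
  have topY': "((Qp * H1) * Y') $$ (a,b) = (Qp * Z) $$ (a,b)" if a: "a < m1" and b: "b < L" for a b
  proof -
    have "((Qp * H1) * Y') $$ (a,b) = (\<Sum>c<m1. (Qp * H1) $$ (a,c) * Y' $$ (c,b))"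
      by (subst mult_entry) (use QH Y' a b m1 in auto)
    also have "\<dots> = (?R * Y') $$ (a,b)"
      by (subst mult_entry) (use Y' a b in auto)
    also have "?R * Y' = ?t" unfolding Y'_def by (rule mcancel[OF Ri(2)]) (use Ri in auto)
    finally show ?thesis using a b by simp
  qed
  define P where "P = Qp * (H1 * Y - Z)"
  define P' where "P' = Qp * (H1 * Y' - Z)"
  have P: "P \<in> carrier_mat m L" unfolding P_def by (rule carrier_matI) (use Qp H1 Y Z in simp_all)
  have P': "P' \<in> carrier_mat m L" unfolding P'_def by (rule carrier_matI) (use Qp H1 Y' Z in simp_all)
  have P'e: "P' $$ (a,b) = (if a < m1 then 0 else P $$ (a,b))" if a: "a < m" and b: "b < L" for a b
    unfolding P'_def P_def PX[OF Y] PX[OF Y'] using a b low[OF Y _ a(1) b] low[OF Y' _ a(1) b] topY'[of a b] Y Y' QH QZ Qp(1) Z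
    by (cases "a < m1") simp_all
  have "fs P \<le> fs P'"
  proof -
    have "frob_norm (H1 * Y - Z) \<le> frob_norm (H1 * Y' - Z)" using mn Y' by auto
    hence "fs (H1 * Y - Z) \<le> fs (H1 * Y' - Z)" unfolding frob_fs using fs_nonneg by simp
    moreover have "fs P = fs (H1 * Y - Z)" unfolding P_def by (rule fs_unitary[OF Qp, of _ L], rule carrier_matI) (use H1 Y Z in simp_all)
    moreover have "fs P' = fs (H1 * Y' - Z)" unfolding P'_def by (rule fs_unitary[OF Qp, of _ L], rule carrier_matI) (use H1 Y' Z in simp_all)
    ultimately show ?thesis by simp
  qed
  moreover have "fs P = (\<Sum>a<m. \<Sum>b<L. if a < m1 then (cmod (P $$ (a,b)))^2 else 0) + fs P'"
  proof -
    have "fs P = (\<Sum>a<m. \<Sum>b<L. (if a < m1 then (cmod (P $$ (a,b)))^2 else 0) + (cmod (P' $$ (a,b)))^2)"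
      unfolding fs_def using P P' P'e by (intro sum.cong refl) auto
    thus ?thesis unfolding fs_def using P' by (simp add: sum.distrib)
  qed
  ultimately have s0: "(\<Sum>a<m. \<Sum>b<L. if a < m1 then (cmod (P $$ (a,b)))^2 else 0) = 0"
    by (smt (verit) sum_nonneg zero_le_power2)
  show ?thesis
  proof (intro allI impI)
    fix a b assume a: "a < m1" and b: "b < L"
    have "(\<Sum>b<L. if a < m1 then (cmod (P $$ (a,b)))^2 else 0) = 0"
    proof -
      have "\<forall>x\<in>{..<m}. (\<Sum>b<L. if x < m1 then (cmod (P $$ (x,b)))^2 else 0) = 0"
        using s0 sum_nonneg_eq_0_iff[of "{..<m}" "\<lambda>a. \<Sum>b<L. if a < m1 then (cmod (P $$ (a,b)))^2 else 0"]
        by (simp add: sum_nonneg)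
      moreover have "a \<in> {..<m}" using a m1 by simp
      ultimately show ?thesis by blast
    qed
    hence "(cmod (P $$ (a,b)))^2 = 0"
      using sum_nonneg_eq_0_iff[of "{..<L}" "\<lambda>b. if a < m1 then (cmod (P $$ (a,b)))^2 else 0"] a b by simp
    thus "(Qp * (H1 * Y - Z)) $$ (a,b) = 0" unfolding P_def by simp
  qed
qed


lemma Emat_Esh: "Emat L j = Esh (j*L) L 0"
  unfolding Emat_def Esh_def by (rule eq_matI) auto

lemma Esh_Hess: assumes H: "H \<in> carrier_mat ((j+1)*L) (j*L)" and hb: "block_hessenberg L H" and j: "j \<ge> 2" and L: "L \<ge> 1"
  shows "H * Esh (j*L) ((j-1)*L) 0 = Esh ((j+1)*L) (j*L) 0 * blk 0 0 (j*L) ((j-1)*L) H"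
proof -
  have jj: "(j-1)*L \<le> j*L" by simp
  have l: "H * Esh (j*L) ((j-1)*L) 0 = blk 0 0 ((j+1)*L) ((j-1)*L) H"
    by (rule E_right[OF H]) simp
  have r: "Esh ((j+1)*L) (j*L) 0 * blk 0 0 (j*L) ((j-1)*L) H = mat ((j+1)*L) ((j-1)*L)
     (\<lambda>(a,b). if 0 \<le> a \<and> a < 0 + j*L then blk 0 0 (j*L) ((j-1)*L) H $$ (a - 0, b) else 0)"
    by (rule E_left[OF blk_carrier])
  have "blk 0 0 ((j+1)*L) ((j-1)*L) H = mat ((j+1)*L) ((j-1)*L)
     (\<lambda>(a,b). if 0 \<le> a \<and> a < 0 + j*L then blk 0 0 (j*L) ((j-1)*L) H $$ (a - 0, b) else 0)"
  proof (rule eq_matI)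
    fix a b assume "a < dim_row (mat ((j+1)*L) ((j-1)*L)
     (\<lambda>(a,b). if 0 \<le> a \<and> a < 0 + j*L then blk 0 0 (j*L) ((j-1)*L) H $$ (a - 0, b) else 0))"
      "b < dim_col (mat ((j+1)*L) ((j-1)*L)
     (\<lambda>(a,b). if 0 \<le> a \<and> a < 0 + j*L then blk 0 0 (j*L) ((j-1)*L) H $$ (a - 0, b) else 0))"
    hence a: "a < (j+1)*L" and b: "b < (j-1)*L" by auto
    show "blk 0 0 ((j+1)*L) ((j-1)*L) H $$ (a,b) = mat ((j+1)*L) ((j-1)*L)
     (\<lambda>(a,b). if 0 \<le> a \<and> a < 0 + j*L then blk 0 0 (j*L) ((j-1)*L) H $$ (a - 0, b) else 0) $$ (a,b)"
    proof (cases "a < j*L")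
      case True then show ?thesis using a b by simp
    next
      case False
      have Lp: "L > 0" using L by simp
      have "j*L \<le> a" using False by simp
      hence "j*L div L \<le> a div L" by (rule div_le_mono)
      hence ja: "j \<le> a div L" using Lp by simp
      have jb: "b div L < j - 1" by (rule less_mult_imp_div_less[OF b])
      have bl: "b < j*L" using b jj by linarith
      have "a div L > b div L + 1" using ja jb j by linarith
      hence H0: "H $$ (a,b) = 0" using hb H a bl unfolding block_hessenberg_def by simp
      have "blk 0 0 ((j+1)*L) ((j-1)*L) H $$ (a,b) = H $$ (a,b)" using a b by simp
      also have "\<dots> = 0" by (rule H0)
      also have "0 = mat ((j+1)*L) ((j-1)*L)
       (\<lambda>(a,b). if 0 \<le> a \<and> a < 0 + j*L then blk 0 0 (j*L) ((j-1)*L) H $$ (a - 0, b) else 0) $$ (a,b)"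
        using a b False by simp
      finally show ?thesis .
    qed
  qed simp_all
  then show ?thesis unfolding l r .
qed

lemma diag_sq: assumes C: "(C::cm) \<in> carrier_mat L L" and dC: "real_nonneg_diag C" and a: "a < L"
  shows "(C * C) $$ (a,a) = complex_of_real ((Re (C $$ (a,a)))^2)"
proof -
  have dz: "\<And>x y. x < L \<Longrightarrow> y < L \<Longrightarrow> x \<noteq> y \<Longrightarrow> C $$ (x,y) = 0" using dC C unfolding real_nonneg_diag_def by auto
  have dr: "Im (C $$ (a,a)) = 0" using dC C a unfolding real_nonneg_diag_def by auto
  have "(C * C) $$ (a,a) = (\<Sum>k<L. C $$ (a,k) * C $$ (k,a))" using C a by simp
  also have "\<dots> = (if a < L then C $$ (a,a) * C $$ (a,a) else 0)"
    by (rule sum_single) (use dz a in auto)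
  also have "\<dots> = complex_of_real ((Re (C $$ (a,a)))^2)"
    using a dr by (auto simp: power2_eq_square complex_eq_iff)
  finally show ?thesis .
qed

lemma cs_pair: assumes C: "(C::cm) \<in> carrier_mat L L" "real_nonneg_diag C" and S: "S \<in> carrier_mat L L" "real_nonneg_diag S"
  and CS: "C * C + S * S = 1\<^sub>m L" and a: "a < L"
  shows "(cos (arccos (Re (C $$ (a,a)))), sin (arccos (Re (C $$ (a,a))))) = (Re (C $$ (a,a)), Re (S $$ (a,a)))"
proof -
  let ?c = "Re (C $$ (a,a))" let ?s = "Re (S $$ (a,a))"
  have "(C * C + S * S) $$ (a,a) = 1" using CS a by simp
  hence "(C * C) $$ (a,a) + (S * S) $$ (a,a) = 1" using C S a by simp
  hence "complex_of_real (?c^2) + complex_of_real (?s^2) = 1" using diag_sq[OF C a] diag_sq[OF S a] by simp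
  hence "Re (complex_of_real (?c^2) + complex_of_real (?s^2)) = Re 1" by (rule arg_cong)
  hence cs1: "?c^2 + ?s^2 = 1" by simp
  have c0: "?c \<ge> 0" and s0: "?s \<ge> 0" using C S a unfolding real_nonneg_diag_def by auto
  have c1: "?c \<le> 1"
  proof (rule ccontr)
    assume "\<not> ?c \<le> 1"
    hence "?c^2 > 1" by (simp add: one_less_power)
    with cs1 show False by (smt (verit) zero_le_power2)
  qed
  have "sin (arccos ?c) = sqrt (1 - ?c^2)" using c0 c1 by (simp add: sin_arccos)
  also have "1 - ?c^2 = ?s^2" using cs1 by simp
  also have "sqrt (?s^2) = ?s" using s0 by simp
  finally show ?thesis using c0 c1 by simp
qed

theorem mainTheorem11:
  fixes n L j :: nat
    and A B X0 V1 S0 W H Y :: "complex mat"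
    and Om :: "nat \<Rightarrow> complex mat"
  assumes "n \<ge> 1" "L \<ge> 1" "j \<ge> 2"
    and A: "A \<in> carrier_mat n n" and B: "B \<in> carrier_mat n L" and X0: "X0 \<in> carrier_mat n L"
    and QR0: "V1 \<in> carrier_mat n L" "orthonormal_cols V1" "S0 \<in> carrier_mat L L" "upper_tri S0"
             "B - A * X0 = V1 * S0"
    and W: "W \<in> carrier_mat n ((j+1)*L)" "orthonormal_cols W" "blk 0 0 n L W = V1"
    and H: "H \<in> carrier_mat ((j+1)*L) (j*L)" "block_hessenberg L H"
    and arnoldi: "A * blk 0 0 n (j*L) W = W * H"
    and Hrank: "full_col_rank H"
    and Om: "\<forall>i \<in> {1..j}. Om i \<in> carrier_mat (2*L) (2*L) \<and> unitary_mat (Om i)"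
    and QRH: "\<forall>k \<in> {1..j}.
         (\<forall>a < (k+1)*L. \<forall>b < k*L. b < a \<longrightarrow>
             (Qbar L Om k * blk 0 0 ((k+1)*L) (k*L) H) $$ (a,b) = 0) \<and>
         det (blk 0 0 (k*L) (k*L) (Qbar L Om k * blk 0 0 ((k+1)*L) (k*L) H)) \<noteq> 0"
    and Y: "Y \<in> carrier_mat ((j-1)*L) L"
    and Ymin: "\<forall>Y' \<in> carrier_mat ((j-1)*L) L.
         frob_norm (blk 0 0 (j*L) ((j-1)*L) H * Y - Emat L j * S0)
           \<le> frob_norm (blk 0 0 (j*L) ((j-1)*L) H * Y' - Emat L j * S0)"
    and Frank: "full_col_rank (B - A * (X0 + blk 0 0 n ((j-1)*L) W * Y))"
  shows "\<forall>U Wb p. U \<in> carrier_mat n L \<and> orthonormal_cols U \<and>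
           colspace U = colspace (B - A * (X0 + blk 0 0 n ((j-1)*L) W * Y)) \<and>
           Wb \<in> carrier_mat n p \<and> orthonormal_cols Wb \<and>
           colspace Wb = colspace (A * blk 0 0 n (j*L) W)
         \<longrightarrow>
           image_mset cos (principal_angles U Wb) = singvals (blk 0 0 L L (Om j)) \<and>
           (\<forall>U1 U2 V C S.
              U1 \<in> carrier_mat L L \<and> U2 \<in> carrier_mat L L \<and> V \<in> carrier_mat L L \<and>
              C \<in> carrier_mat L L \<and> S \<in> carrier_mat L L \<and>
              unitary_mat U1 \<and> unitary_mat U2 \<and> unitary_mat V \<and>
              real_nonneg_diag C \<and> real_nonneg_diag S \<and> C * C + S * S = 1\<^sub>m L \<and>
              blk 0 0 L L (Om j) = U1 * C * mat_adjoint V \<and>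
              blk L 0 L L (Om j) = U2 * S * mat_adjoint V
            \<longrightarrow> mset (map (\<lambda>a. (Re (C $$ (a,a)), Re (S $$ (a,a)))) [0..<L])
                = image_mset (\<lambda>\<theta>. (cos \<theta>, sin \<theta>)) (principal_angles U Wb))"
proof -
  note j2 = \<open>j \<ge> 2\<close> and L1 = \<open>L \<ge> 1\<close>
  define m where "m = j*L"
  define m1 where "m1 = (j-1)*L"
  define mm where "mm = (j+1)*L"
  have mL: "m1 + L = m" "m + L = mm" "m1 \<le> m" "m \<le> mm" "m1 + L \<le> m" "0 + m \<le> mm" "0 + L \<le> m" "m1 + L \<le> mm"
    using j2 unfolding m_def m1_def mm_def by (cases j; auto simp: algebra_simps)+
  have W1: "W \<in> carrier_mat n mm" using W(1) unfolding mm_def .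
  have H1: "H \<in> carrier_mat mm m" using H(1) unfolding mm_def m_def .
  have Y1: "Y \<in> carrier_mat m1 L" using Y unfolding m1_def .
  have OmU: "\<forall>i'\<in>{1..j}. Om i' \<in> carrier_mat (2*L) (2*L) \<and> mat_adjoint (Om i') * Om i' = 1\<^sub>m (2*L)"
    using Om unfolding unitary_mat_def orthonormal_cols_def by auto
  have oW: "mat_adjoint W * W = 1\<^sub>m mm" using W(2) W1 unfolding orthonormal_cols_def by simp
  define T where "T = Esh mm m 0"
  have T: "T \<in> carrier_mat mm m" "mat_adjoint T * T = 1\<^sub>m m" unfolding T_def using Esh_orth[of 0 m mm] mL by auto
  define Wj where "Wj = blk 0 0 n m W"
  have WjT: "Wj = W * T" unfolding Wj_def T_def by (rule E_right[OF W1, symmetric]) (use mL in simp)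
  have Wj: "Wj \<in> carrier_mat n m" unfolding Wj_def by simp
  have oWj: "mat_adjoint Wj * Wj = 1\<^sub>m m" unfolding WjT by (rule onc_mult[OF W1 T(1) oW T(2)])
  define Qp where "Qp = prodQ L Om j (j-1)"
  have QbarQp: "Qbar L Om (j-1) = Qp" unfolding Qp_def Qbar_def using j2 by simp
  have Qp: "Qp \<in> carrier_mat m m" unfolding Qp_def m_def by (rule prodQ_carrier)
  have uQp: "mat_adjoint Qp * Qp = 1\<^sub>m m" unfolding Qp_def m_def
    by (rule prodQ_unitary) (use OmU j2 in auto)
  have uQp': "Qp * mat_adjoint Qp = 1\<^sub>m m" by (rule sq_right_inv[OF Qp uQp])
  define Qb where "Qb = prodQ L Om (j+1) j"
  have QbarQb: "Qbar L Om j = Qb" unfolding Qb_def Qbar_def by simp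
  have Qb: "Qb \<in> carrier_mat mm mm" unfolding Qb_def mm_def by (rule prodQ_carrier)
  have uQb: "mat_adjoint Qb * Qb = 1\<^sub>m mm" unfolding Qb_def mm_def
    by (rule prodQ_unitary) (use OmU j2 in auto)
  have uQb': "Qb * mat_adjoint Qb = 1\<^sub>m mm" by (rule sq_right_inv[OF Qb uQb])
  define Hj1 where "Hj1 = blk 0 0 m m1 H"
  define E0 where "E0 = Esh m L 0"
  have Hj1: "Hj1 \<in> carrier_mat m m1" unfolding Hj1_def by simp
  have E0: "E0 \<in> carrier_mat m L" unfolding E0_def by simp
  define F where "F = B - A * (X0 + blk 0 0 n m1 W * Y)"
  have AWj: "A * Wj = W * H" using arnoldi unfolding Wj_def m_def .
  define W1 where "W1 = blk 0 0 n m1 W"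
  have W1E: "W1 = Wj * Esh m m1 0"
  proof -
    have "W1 = W * Esh mm m1 0" unfolding W1_def by (rule E_right[OF W1, symmetric]) (use mL in simp)
    also have "Esh mm m1 0 = T * Esh m m1 0" unfolding T_def using Esh_comp[of 0 m1 m mm 0] mL by simp
    also have "W * (T * Esh m m1 0) = Wj * Esh m m1 0" unfolding WjT by (rule massoc[symmetric]) (use W1 T in simp_all)
    finally show ?thesis .
  qed
  have AW1: "A * W1 = Wj * Hj1"
  proof -
    have "A * W1 = (A * Wj) * Esh m m1 0" unfolding W1E by (rule massoc[symmetric]) (use A Wj in simp_all)
    also have "\<dots> = W * (H * Esh m m1 0)" unfolding AWj by (rule massoc) (use W1 H1 in simp_all)
    also have "H * Esh m m1 0 = T * Hj1" unfolding T_def Hj1_def m_def m1_def mm_def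
      by (rule Esh_Hess[OF H(1) H(2) j2 L1])
    also have "W * (T * Hj1) = Wj * Hj1" unfolding WjT by (rule massoc[symmetric]) (use W1 T Hj1 in simp_all)
    finally show ?thesis .
  qed
  have V1E: "V1 = Wj * E0"
  proof -
    have "V1 = W * Esh mm L 0" unfolding W(3)[symmetric] by (rule E_right[OF W1, symmetric]) (use mL in simp)
    also have "Esh mm L 0 = T * E0" unfolding T_def E0_def using Esh_comp[of 0 L m mm 0] mL by simp
    also have "W * (T * E0) = Wj * E0" unfolding WjT by (rule massoc[symmetric]) (use W1 T E0 in simp_all)
    finally show ?thesis .
  qed
  have Fres: "F = Wj * (E0 * S0 - Hj1 * Y)"
  proof -
    have W1Y: "W1 * Y \<in> carrier_mat n L" unfolding W1_def by (rule mult_carrier_mat[OF blk_carrier Y1])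
    have "A * (X0 + W1 * Y) = A * X0 + A * (W1 * Y)"
      by (rule mult_add_distrib_mat[OF A X0 W1Y])
    also have "A * (W1 * Y) = (A * W1) * Y" by (rule massoc[symmetric]) (use A Y1 in \<open>simp_all add: W1_def\<close>)
    finally have e1: "A * (X0 + W1 * Y) = A * X0 + (Wj * Hj1) * Y" unfolding AW1 .
    have "F = (B - A * X0) - (Wj * Hj1) * Y" unfolding F_def W1_def[symmetric] e1
      by (rule eq_matI) (use A B X0 Wj Hj1 Y1 in simp_all)
    also have "\<dots> = Wj * (E0 * S0) - Wj * (Hj1 * Y)" unfolding QR0(5) V1E
      by (subst massoc, (use Wj E0 QR0(3) Hj1 Y1 in simp_all)[2], subst massoc, (use Wj E0 QR0(3) Hj1 Y1 in simp_all)[2], rule refl)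
    also have "\<dots> = Wj * (E0 * S0 - Hj1 * Y)"
      by (rule mult_minus_distrib_mat[symmetric, OF Wj mult_carrier_mat[OF E0 QR0(3)] mult_carrier_mat[OF Hj1 Y1]])
    finally show ?thesis .
  qed
  have jj: "j - 1 + 1 = j" using j2 by simp
  have q: "(\<forall>a < (j-1+1)*L. \<forall>b < (j-1)*L. b < a \<longrightarrow>
             (Qbar L Om (j-1) * blk 0 0 ((j-1+1)*L) ((j-1)*L) H) $$ (a,b) = 0) \<and>
         det (blk 0 0 ((j-1)*L) ((j-1)*L) (Qbar L Om (j-1) * blk 0 0 ((j-1+1)*L) ((j-1)*L) H)) \<noteq> 0"
    by (rule QRH[THEN bspec]) (use j2 in simp)
  hence q': "(\<forall>a < m. \<forall>b < m1. b < a \<longrightarrow> (Qp * Hj1) $$ (a,b) = 0) \<and> det (blk 0 0 m1 m1 (Qp * Hj1)) \<noteq> 0"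
    unfolding jj QbarQp m_def[symmetric] m1_def[symmetric] Hj1_def[symmetric] .
  have ES: "E0 * S0 \<in> carrier_mat m L" by (rule mult_carrier_mat[OF E0 QR0(3)])
  have mn: "\<forall>Y' \<in> carrier_mat m1 L. frob_norm (Hj1 * Y - E0 * S0) \<le> frob_norm (Hj1 * Y' - E0 * S0)"
    using Ymin unfolding Emat_Esh m_def[symmetric] m1_def[symmetric] Hj1_def[symmetric] E0_def[symmetric] .
  have LSz: "\<forall>a<m1. \<forall>b<L. (Qp * (Hj1 * Y - E0 * S0)) $$ (a,b) = 0"
    by (rule ls_top_zero[OF Qp uQp Hj1 mL(3) ES]) (use q' Y1 mn in auto)
  define d where "d = E0 * S0 - Hj1 * Y"
  have HY: "Hj1 * Y \<in> carrier_mat m L" by (rule mult_carrier_mat[OF Hj1 Y1])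
  have d: "d \<in> carrier_mat m L" unfolding d_def by (rule minus_carrier_mat[OF HY])
  have HYE: "Hj1 * Y - E0 * S0 \<in> carrier_mat m L" by (rule minus_carrier_mat[OF ES])
  have dneg: "d = (-1) \<cdot>\<^sub>m (Hj1 * Y - E0 * S0)"
    unfolding d_def by (rule eq_matI) (use E0 QR0(3) Hj1 Y1 in simp_all)
  have Qd: "Qp * d = (-1) \<cdot>\<^sub>m (Qp * (Hj1 * Y - E0 * S0))"
    unfolding dneg by (rule mult_smult_distrib[OF Qp HYE])
  have LSz': "\<forall>a<m1. \<forall>b<L. (Qp * d) $$ (a,b) = 0"
  proof (intro allI impI)
    fix a b assume a: "a < m1" and b: "b < L"
    have am: "a < m" using a mL by linarith
    have M: "Qp * (Hj1 * Y - E0 * S0) \<in> carrier_mat m L" by (rule mult_carrier_mat[OF Qp HYE])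
    hence dM: "dim_row (Qp * (Hj1 * Y - E0 * S0)) = m" "dim_col (Qp * (Hj1 * Y - E0 * S0)) = L" by auto
    have z: "(Qp * (Hj1 * Y - E0 * S0)) $$ (a,b) = 0" using LSz a b by blast
    have "((-1) \<cdot>\<^sub>m (Qp * (Hj1 * Y - E0 * S0))) $$ (a,b) = -1 * (Qp * (Hj1 * Y - E0 * S0)) $$ (a,b)"
      by (rule index_smult_mat(1)) (simp_all only: dM am b)
    thus "(Qp * d) $$ (a,b) = 0" unfolding Qd z by simp
  qed
  define Elast where "Elast = Esh m L m1"
  have Elast: "Elast \<in> carrier_mat m L" "mat_adjoint Elast * Elast = 1\<^sub>m L"
    unfolding Elast_def using Esh_orth[of m1 L m] mL by auto
  define g where "g = blk m1 0 L L (Qp * d)"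
  have Qpd: "Qp * d = Elast * g"
  proof -
    have "Elast * g = mat m L (\<lambda>(a,b). if m1 \<le> a \<and> a < m1 + L then g $$ (a - m1, b) else 0)"
      unfolding Elast_def g_def by (rule E_left[OF blk_carrier])
    also have "\<dots> = Qp * d"
    proof (rule eq_matI)
      fix a b assume "a < dim_row (Qp * d)" "b < dim_col (Qp * d)"
      hence a: "a < m" and b: "b < L" using Qp d by auto
      show "mat m L (\<lambda>(a,b). if m1 \<le> a \<and> a < m1 + L then g $$ (a - m1, b) else 0) $$ (a,b) = (Qp * d) $$ (a,b)"
      proof (cases "m1 \<le> a")
        case True
        hence "a - m1 < L" using a mL by linarith
        then show ?thesis using True a b mL unfolding g_def by simp
      next
        case False
        then show ?thesis using a b LSz' by simp
      qed
    qed (use Qp d in simp_all)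
    finally show ?thesis by simp
  qed
  have g: "g \<in> carrier_mat L L" unfolding g_def by simp
  define U0 where "U0 = Wj * mat_adjoint Qp * Elast"
  have U0: "U0 \<in> carrier_mat n L" unfolding U0_def by (rule carrier_matI) (use Wj Qp Elast in simp_all)
  have oU0: "mat_adjoint U0 * U0 = 1\<^sub>m L"
  proof -
    have "mat_adjoint (Wj * mat_adjoint Qp) * (Wj * mat_adjoint Qp) = 1\<^sub>m m"
      by (rule onc_mult[OF Wj adj_carrier[OF Qp] oWj]) (simp add: uQp')
    thus ?thesis unfolding U0_def
      by (rule onc_mult[OF mult_carrier_mat[OF Wj adj_carrier[OF Qp]] Elast(1) _ Elast(2)])
  qed
  have FU0: "F = U0 * g"
  proof -
    have "d = mat_adjoint Qp * (Qp * d)" by (rule mcancel[OF uQp, symmetric]) (use Qp d in simp_all)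
    hence "F = Wj * (mat_adjoint Qp * (Elast * g))" unfolding Fres d_def[symmetric] Qpd by simp
    also have "\<dots> = U0 * g" unfolding U0_def using Wj Qp Elast g by (simp add: massoc)
    finally show ?thesis .
  qed
  have q2: "(\<forall>a < (j+1)*L. \<forall>b < j*L. b < a \<longrightarrow>
             (Qbar L Om j * blk 0 0 ((j+1)*L) (j*L) H) $$ (a,b) = 0) \<and>
         det (blk 0 0 (j*L) (j*L) (Qbar L Om j * blk 0 0 ((j+1)*L) (j*L) H)) \<noteq> 0"
    by (rule QRH[THEN bspec]) (use j2 in simp)
  hence q2': "(\<forall>a < mm. \<forall>b < m. b < a \<longrightarrow> (Qb * H) $$ (a,b) = 0) \<and> det (blk 0 0 m m (Qb * H)) \<noteq> 0"
    unfolding QbarQb m_def[symmetric] mm_def[symmetric] blk_full[OF H1] .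
  define R where "R = blk 0 0 m m (Qb * H)"
  have R: "R \<in> carrier_mat m m" unfolding R_def by simp
  have QbH: "Qb * H = T * R"
  proof -
    have "T * R = mat mm m (\<lambda>(a,b). if 0 \<le> a \<and> a < 0 + m then R $$ (a - 0, b) else 0)"
      unfolding T_def by (rule E_left[OF R])
    also have "\<dots> = Qb * H"
    proof (rule eq_matI)
      fix a b assume "a < dim_row (Qb * H)" "b < dim_col (Qb * H)"
      hence a: "a < mm" and b: "b < m" using Qb H1 by auto
      show "mat mm m (\<lambda>(a,b). if 0 \<le> a \<and> a < 0 + m then R $$ (a - 0, b) else 0) $$ (a,b) = (Qb * H) $$ (a,b)"
      proof (cases "a < m")
        case True
        then show ?thesis using a b unfolding R_def by simp
      next
        case False
        hence "b < a" using b by linarith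
        hence "(Qb * H) $$ (a,b) = 0" using q2' a b by blast
        then show ?thesis using a b False by simp
      qed
    qed (use Qb H1 in simp_all)
    finally show ?thesis by simp
  qed
  define W0 where "W0 = W * mat_adjoint Qb * T"
  have W0: "W0 \<in> carrier_mat n m" unfolding W0_def by (rule carrier_matI) (use W1 Qb T in simp_all)
  have oW0: "mat_adjoint W0 * W0 = 1\<^sub>m m"
  proof -
    have "mat_adjoint (W * mat_adjoint Qb) * (W * mat_adjoint Qb) = 1\<^sub>m mm"
      by (rule onc_mult[OF W1 adj_carrier[OF Qb] oW]) (simp add: uQb')
    thus ?thesis unfolding W0_def
      by (rule onc_mult[OF mult_carrier_mat[OF W1 adj_carrier[OF Qb]] T(1) _ T(2)])
  qed
  have AWjR: "A * Wj = W0 * R"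
  proof -
    have "A * Wj = W * (mat_adjoint Qb * (Qb * H))" unfolding AWj
      by (subst mcancel[OF uQb]) (use Qb H1 in simp_all)
    also have "\<dots> = W0 * R" unfolding QbH W0_def using W1 Qb T R by (simp add: massoc)
    finally show ?thesis .
  qed
  obtain Ri where Ri: "Ri \<in> carrier_mat m m" "R * Ri = 1\<^sub>m m"
    using has_inverse[OF R] q2' unfolding R_def by blast
  have W0Ri: "W0 = (A * Wj) * Ri"
    unfolding AWjR by (subst massoc) (use W0 R Ri in simp_all)
  define Qj where "Qj = Qemb L (j+1) j (Om j)"
  have Qj: "Qj \<in> carrier_mat mm mm" unfolding Qj_def mm_def by (rule Qemb_carrier)
  define P1 where "P1 = prodQ L Om (j+1) (j-1)"
  have P1: "P1 \<in> carrier_mat mm mm" unfolding P1_def mm_def by (rule prodQ_carrier)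
  have QbE: "Qb = Qj * P1" unfolding Qb_def Qj_def P1_def using j2 by (cases j) auto
  have P1T: "P1 * T = T * Qp" unfolding P1_def T_def Qp_def mm_def m_def
    by (rule prodQ_emb) (use j2 in simp)
  define Q11 where "Q11 = blk 0 0 L L (Om j)"
  define K where "K = mat_adjoint W0 * U0"
  have Kform: "K = Esh m L m1 * Q11"
  proof -
    have a1: "mat_adjoint W0 = mat_adjoint T * (Qb * mat_adjoint W)"
      unfolding W0_def using W1 Qb T by (simp add: adj_mult)
    have a2: "U0 = W * (T * (mat_adjoint Qp * Elast))"
      unfolding U0_def WjT using W1 T Qp Elast by (simp add: massoc)
    have "K = mat_adjoint T * (Qb * (mat_adjoint W * (W * (T * (mat_adjoint Qp * Elast)))))"
      unfolding K_def a1 a2 using W1 T Qb Qp Elast by (simp add: massoc)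
    also have "mat_adjoint W * (W * (T * (mat_adjoint Qp * Elast))) = T * (mat_adjoint Qp * Elast)"
      by (rule mcancel[OF oW]) (use W1 T Qp Elast in simp_all)
    also have "Qb * (T * (mat_adjoint Qp * Elast)) = Qj * ((P1 * T) * (mat_adjoint Qp * Elast))"
      unfolding QbE using Qj P1 T Qp Elast by (simp add: massoc)
    also have "(P1 * T) * (mat_adjoint Qp * Elast) = T * (Qp * (mat_adjoint Qp * Elast))"
      unfolding P1T using T Qp Elast by (simp add: massoc)
    also have "Qp * (mat_adjoint Qp * Elast) = Elast"
      by (rule mcancel[OF uQp']) (use Qp Elast in simp_all)
    also have "T * Elast = Esh mm L m1"
      unfolding T_def Elast_def using Esh_comp[of m1 L m mm 0] mL by simp
    also have "mat_adjoint T * (Qj * Esh mm L m1) = blk 0 0 m L (Qj * Esh mm L m1)"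
      unfolding T_def by (rule E_left_adj) (use Qj mL in \<open>simp_all add: mult_carrier_mat[OF Qj Esh_carrier]\<close>)
    also have "Qj * Esh mm L m1 = blk 0 m1 mm L Qj"
      by (rule E_right[OF Qj]) (use mL in simp)
    also have "blk 0 0 m L (blk 0 m1 mm L Qj) = Esh m L m1 * Q11"
    proof -
      have "Esh m L m1 * Q11 = mat m L (\<lambda>(a,b). if m1 \<le> a \<and> a < m1 + L then Q11 $$ (a - m1, b) else 0)"
        unfolding Q11_def by (rule E_left[OF blk_carrier])
      also have "\<dots> = blk 0 0 m L (blk 0 m1 mm L Qj)"
      proof (rule eq_matI)
        fix a b assume "a < dim_row (blk 0 0 m L (blk 0 m1 mm L Qj))" "b < dim_col (blk 0 0 m L (blk 0 m1 mm L Qj))"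
        hence a: "a < m" and b: "b < L" by auto
        have am: "a < mm" using a mL by linarith
        have bm: "b + m1 < mm" using b mL by linarith
        have s1: "(j - 1) * L = m1" unfolding m1_def ..
        have s2: "(j + 1) * L = mm" unfolding mm_def ..
        have e: "blk 0 0 m L (blk 0 m1 mm L Qj) $$ (a,b) = Qj $$ (a, b + m1)" using a b am by simp
        have e2: "Qj $$ (a, b + m1) = (if m1 \<le> a \<and> a < mm \<and> m1 \<le> b + m1 \<and> b + m1 < mm
           then Om j $$ (a - m1, b + m1 - m1) else if a = b + m1 then 1 else 0)"
          unfolding Qj_def Qemb_def s1 s2 using am bm by (simp add: mm_def)
        show "mat m L (\<lambda>(a,b). if m1 \<le> a \<and> a < m1 + L then Q11 $$ (a - m1, b) else 0) $$ (a,b) = blk 0 0 m L (blk 0 m1 mm L Qj) $$ (a,b)"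
        proof (cases "m1 \<le> a")
          case True
          hence "a - m1 < L" using a mL by linarith
          then show ?thesis unfolding e e2 Q11_def using True a b am bm mL by simp
        next
          case False
          then show ?thesis unfolding e e2 using a b by simp
        qed
      qed simp_all
      finally show ?thesis by simp
    qed
    finally show ?thesis .
  qed
  have Q11: "Q11 \<in> carrier_mat L L" unfolding Q11_def by simp
  have KK: "mat_adjoint K * K = mat_adjoint Q11 * Q11"
  proof -
    have "mat_adjoint K * K = mat_adjoint Q11 * (mat_adjoint (Esh m L m1) * (Esh m L m1 * Q11))"
      unfolding Kform using Q11 by (simp add: adj_mult massoc)
    also have "mat_adjoint (Esh m L m1) * (Esh m L m1 * Q11) = Q11"
      by (rule mcancel[OF Esh_orth]) (use mL Q11 in simp_all)
    finally show ?thesis .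
  qed
  have K: "K \<in> carrier_mat m L" unfolding Kform by (rule mult_carrier_mat[OF Esh_carrier Q11])
  have Omj: "Om j \<in> carrier_mat (2*L) (2*L)" "mat_adjoint (Om j) * Om j = 1\<^sub>m (2*L)"
    using OmU j2 by auto
  have svK: "singvals K = singvals Q11" unfolding singvals_def KK ..
  have AWjc: "A * Wj \<in> carrier_mat n m" by (rule mult_carrier_mat[OF A Wj])
  show ?thesis
  proof (intro allI impI)
    fix U Wb p
    assume asm: "U \<in> carrier_mat n L \<and> orthonormal_cols U \<and>
           colspace U = colspace (B - A * (X0 + blk 0 0 n ((j-1)*L) W * Y)) \<and>
           Wb \<in> carrier_mat n p \<and> orthonormal_cols Wb \<and>
           colspace Wb = colspace (A * blk 0 0 n (j*L) W)"
    have U: "U \<in> carrier_mat n L" and Wb: "Wb \<in> carrier_mat n p" using asm by auto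
    have oU: "mat_adjoint U * U = 1\<^sub>m L" using asm U unfolding orthonormal_cols_def by auto
    have oWb: "mat_adjoint Wb * Wb = 1\<^sub>m p" using asm Wb unfolding orthonormal_cols_def by auto
    have colU: "colspace U = colspace F" using asm unfolding F_def m1_def by auto
    have colWb: "colspace Wb = colspace (A * Wj)" using asm unfolding Wj_def m_def by auto
    have sub1: "colspace U \<subseteq> colspace U0" unfolding colU FU0 by (rule colspace_mult_sub[OF U0 g])
    have UT: "U0 * (mat_adjoint U0 * U) = U" by (rule proj_eq[OF U0 oU0 U sub1])
    have sub2: "colspace Wb \<subseteq> colspace W0" unfolding colWb AWjR by (rule colspace_mult_sub[OF W0 R])
    have WbT: "W0 * (mat_adjoint W0 * Wb) = Wb" by (rule proj_eq[OF W0 oW0 Wb sub2])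
    have sub3: "colspace W0 \<subseteq> colspace Wb"
      unfolding colWb by (subst W0Ri) (rule colspace_mult_sub[OF AWjc Ri(1)])
    have W0T: "Wb * (mat_adjoint Wb * W0) = W0" by (rule proj_eq[OF Wb oWb W0 sub3])
    define T1 where "T1 = mat_adjoint U0 * U"
    define T2 where "T2 = mat_adjoint W0 * Wb"
    have T1: "T1 \<in> carrier_mat L L" unfolding T1_def by (rule mult_carrier_mat[OF adj_carrier[OF U0] U])
    have T2: "T2 \<in> carrier_mat m p" unfolding T2_def by (rule mult_carrier_mat[OF adj_carrier[OF W0] Wb])
    have oT1: "mat_adjoint T1 * T1 = 1\<^sub>m L"
    proof -
      have "mat_adjoint T1 * T1 = mat_adjoint U * (U0 * (mat_adjoint U0 * U))"
        unfolding T1_def using U0 U by (simp add: adj_mult massoc)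
      thus ?thesis unfolding UT oU .
    qed
    have T2T2: "T2 * mat_adjoint T2 = 1\<^sub>m m"
    proof -
      have "T2 * mat_adjoint T2 = mat_adjoint W0 * (Wb * (mat_adjoint Wb * W0))"
        unfolding T2_def using W0 Wb by (simp add: adj_mult massoc)
      thus ?thesis unfolding W0T oW0 .
    qed
    define M where "M = mat_adjoint Wb * U"
    have Mc: "M \<in> carrier_mat p L" unfolding M_def by (rule mult_carrier_mat[OF adj_carrier[OF Wb] U])
    have adjWb: "mat_adjoint Wb = mat_adjoint T2 * mat_adjoint W0"
    proof -
      have "mat_adjoint Wb = mat_adjoint (W0 * T2)" unfolding T2_def WbT ..
      thus ?thesis using W0 T2 by (simp add: adj_mult)
    qed
    have Meq: "M = mat_adjoint T2 * (K * T1)"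
    proof -
      have "M = (mat_adjoint T2 * mat_adjoint W0) * (U0 * T1)" unfolding M_def adjWb T1_def UT ..
      also have "\<dots> = mat_adjoint T2 * ((mat_adjoint W0 * U0) * T1)"
        using T2 W0 U0 T1 by (simp add: massoc)
      finally show ?thesis unfolding K_def .
    qed
    have MM: "mat_adjoint M * M = mat_adjoint T1 * (mat_adjoint K * K) * T1"
    proof -
      have "mat_adjoint M * M = mat_adjoint T1 * (mat_adjoint K * (T2 * (mat_adjoint T2 * (K * T1))))"
        unfolding Meq using T1 T2 K by (simp add: adj_mult massoc)
      also have "T2 * (mat_adjoint T2 * (K * T1)) = K * T1"
        by (rule mcancel[OF T2T2]) (use T2 K T1 in simp_all)
      finally show ?thesis using T1 K by (simp add: massoc)
    qed
    have svM: "singvals M = singvals Q11"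
      unfolding svK[symmetric] by (rule singvals_sim[OF Mc K T1 oT1 MM])
    have PA: "principal_angles U Wb = image_mset arccos (singvals Q11)"
      unfolding principal_angles_def M_def[symmetric] svM ..
    show "image_mset cos (principal_angles U Wb) = singvals (blk 0 0 L L (Om j)) \<and>
           (\<forall>U1 U2 V C S.
              U1 \<in> carrier_mat L L \<and> U2 \<in> carrier_mat L L \<and> V \<in> carrier_mat L L \<and>
              C \<in> carrier_mat L L \<and> S \<in> carrier_mat L L \<and>
              unitary_mat U1 \<and> unitary_mat U2 \<and> unitary_mat V \<and>
              real_nonneg_diag C \<and> real_nonneg_diag S \<and> C * C + S * S = 1\<^sub>m L \<and>
              blk 0 0 L L (Om j) = U1 * C * mat_adjoint V \<and>
              blk L 0 L L (Om j) = U2 * S * mat_adjoint V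
            \<longrightarrow> mset (map (\<lambda>a. (Re (C $$ (a,a)), Re (S $$ (a,a)))) [0..<L])
                = image_mset (\<lambda>\<theta>. (cos \<theta>, sin \<theta>)) (principal_angles U Wb))"
    proof (intro conjI allI impI)
      show "image_mset cos (principal_angles U Wb) = singvals (blk 0 0 L L (Om j))"
        unfolding PA Q11_def by (rule cos_arccos_singvals[OF Omj])
    next
      fix U1 U2 V C S
      assume cs: "U1 \<in> carrier_mat L L \<and> U2 \<in> carrier_mat L L \<and> V \<in> carrier_mat L L \<and>
              C \<in> carrier_mat L L \<and> S \<in> carrier_mat L L \<and>
              unitary_mat U1 \<and> unitary_mat U2 \<and> unitary_mat V \<and>
              real_nonneg_diag C \<and> real_nonneg_diag S \<and> C * C + S * S = 1\<^sub>m L \<and>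
              blk 0 0 L L (Om j) = U1 * C * mat_adjoint V \<and>
              blk L 0 L L (Om j) = U2 * S * mat_adjoint V"
      have U1: "U1 \<in> carrier_mat L L" "mat_adjoint U1 * U1 = 1\<^sub>m L"
        using cs unfolding unitary_mat_def orthonormal_cols_def by auto
      have V: "V \<in> carrier_mat L L" "mat_adjoint V * V = 1\<^sub>m L"
        using cs unfolding unitary_mat_def orthonormal_cols_def by auto
      have C: "C \<in> carrier_mat L L" "real_nonneg_diag C" using cs by auto
      have S: "S \<in> carrier_mat L L" "real_nonneg_diag S" using cs by auto
      have CS: "C * C + S * S = 1\<^sub>m L" using cs by auto
      have svC: "singvals Q11 = mset (map (\<lambda>a. Re (C $$ (a,a))) [0..<L])"
        by (rule singvals_CS[OF U1 V C]) (use cs in \<open>simp add: Q11_def\<close>)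
      have "image_mset (\<lambda>\<theta>. (cos \<theta>, sin \<theta>)) (principal_angles U Wb)
         = mset (map (\<lambda>a. (cos (arccos (Re (C $$ (a,a)))), sin (arccos (Re (C $$ (a,a)))))) [0..<L])"
        unfolding PA svC by (simp add: multiset.map_comp comp_def)
      also have "\<dots> = mset (map (\<lambda>a. (Re (C $$ (a,a)), Re (S $$ (a,a)))) [0..<L])"
        by (rule arg_cong[where f=mset], rule map_cong[OF refl]) (use cs_pair[OF C S CS] in simp)
      finally show "mset (map (\<lambda>a. (Re (C $$ (a,a)), Re (S $$ (a,a)))) [0..<L])
                = image_mset (\<lambda>\<theta>. (cos \<theta>, sin \<theta>)) (principal_angles U Wb)" by simp
    qed
  qed
qed

end
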